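(* Let $k\ge0$, $n,q\ge1$, $\mathcal{X}\subset\mathbb{R}^n$ open, and let $\Psi\in C^0(\mathcal{X},\mathbb{R}^q)$ if $k=0$, or $\Psi\in C^k_b(\mathcal{X},\mathbb{R}^q)$ if $k\ge1$, be globally Lipschitz continuous with constant $K_\Psi\in[0,\infty)$ (w.r.t. $\|\cdot\|_\infty$). Fix $K\in[0,\infty)$, $\tau\in(0,T]$ and $w,\tilde w\in(0,\infty)$ with $$K\tau\ \ge\ 2\Big(1+\frac{K_\Psi}{w\tilde w}\Big).$$ Then, with $m=\max\{n,q\}$, there exists a (non-augmented) neural DDE $\Phi\in\mathrm{NDDE}^k_\tau(\mathcal{X},\mathbb{R}^q)$ with $\Phi(x)=\Psi(x)$ for all $x\in\mathcal{X}$, such that its vector field $F:\mathbb{R}\times\Omega_y\to\mathbb{R}^m$ is globally Lipschitz continuous in the second variable on $\mathbb{R}\times\Omega_0$ with Lipschitz constant $K$, where $\Omega_0=\{c_{\lambda(x)}:x\in\mathcal{X}\}\subset\Omega_y$, and its weight matrices satisfy $\|W\|_\infty=w$ and $\|\tilde W\|_\infty=\tilde w$.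
   Context: Throughout, $\|\cdot\|_\infty$ denotes the max-norm on $\mathbb{R}^d$ and, for a matrix $A\in\mathbb{R}^{r\times s}$, the induced norm $\|A\|_\infty=\max_{\|x\|_\infty=1}\|Ax\|_\infty$. Fix $T>0$, a delay $\tau\in[0,T]$ and $m\ge1$, and let $\mathcal{C}=C^0([-\tau,0],\mathbb{R}^m)$ with norm $\|u\|_\infty=\sup_{s\in[-\tau,0]}\|u(s)\|_\infty$. For a function $y$ defined on $[t-\tau,t]$, $y_t\in\mathcal{C}$ is $y_t(s)=y(t+s)$. For $a\in\mathbb{R}^m$, $c_a\in\mathcal{C}$ is the constant function $c_a(s)=a$. Given $F:\Omega\to\mathbb{R}^m$, $\Omega\subset\mathbb{R}\times\mathcal{C}$ open, and $(t_0,u)\in\Omega$, a solution of the DDE $\frac{dy}{dt}=F(t,y_t)$ ($t\ge t_0$), $y_{t_0}=u$, is a continuous $y:[t_0-\tau,t_0+c)\to\mathbb{R}^m$, $c\in(0,\infty]$, with $y_{t_0}=u$, $(t,y_t)\in\Omega$ and $y'(t)=F(t,y_t)$ for $t\in[t_0,t_0+c)$; it is denoted $y(t_0,u)$. $\mathcal{I}_a$ denotes the maximal interval of existence of $y(0,c_a)$. For $k\ge1$, $C^{0,k}_b(\Omega,\mathbb{R}^m)$ denotes the continuous maps $F$ on $\Omega$ that are $k$ times continuously Fréchet differentiable in the second variable with the derivatives of orders $1,\dots,k$ bounded on $\Omega$. Neural DDE: let $n,q\ge1$, $\mathcal{X}\subset\mathbb{R}^n$ open, $\lambda(x)=Wx+b$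 with $W\in\mathbb{R}^{m\times n}$, $b\in\mathbb{R}^m$, $\tilde\lambda(y)=\tilde Wy+\tilde b$ with $\tilde W\in\mathbb{R}^{q\times m}$, $\tilde b\in\mathbb{R}^q$, and $F:\Omega_t\times\Omega_y\to\mathbb{R}^m$ with $\Omega_t\subset\mathbb{R}$, $\Omega_y\subset\mathcal{C}$ open, satisfying the well-definedness conditions: $[0,T]\subset\Omega_t$, $\Omega_0:=\{c_{\lambda(x)}:x\in\mathcal{X}\}\subset\Omega_y$, and $[-\tau,T]\subset\mathcal{I}_{\lambda(x)}$ for all $x\in\mathcal{X}$. The associated neural DDE is $\Phi:\mathcal{X}\to\mathbb{R}^q$, $\Phi(x)=\tilde\lambda(y(0,c_{\lambda(x)})(T))$. For $k\ge1$, $\mathrm{NDDE}^k_\tau(\mathcal{X},\mathbb{R}^q)$ is the set of all such $\Phi$ with $F\in C^{0,k}_b(\Omega_t\times\Omega_y,\mathbb{R}^m)$; $\mathrm{NDDE}^0_\tau(\mathcal{X},\mathbb{R}^q)$ is the set of all such $\Phi$ for which the solutions $y(0,c_{\lambda(x)})$ are unique and continuous (and $\Phi$ is continuous). $\Phi$ is non-augmented if $m\le\max\{n,q\}$ and augmented if $m>\max\{n,q\}$. $C^k_b(\mathcal{X},\mathbb{R}^q)$ denotes the $k$ times continuously differentiable maps whose derivatives of orders $1,\dots,k$ are bounded on $\mathcal{X}$. A map $F:\Omega_t\times\Omega_y\to\mathbb{R}^m$ is globally Lipschitz continuous in the second variable on $\Omega_t\times\Omega_0$ with constant $K$ if $\|F(t,u)-F(t,v)\|_\infty\le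 K\|u-v\|_\infty$ for all $t\in\Omega_t$ and $u,v\in\Omega_0$. *)

theory Defs
  imports "HOL-Analysis.Analysis"
begin

section \<open>Norms\<close>

text \<open>Induced max-norm of a matrix A (r rows, s columns):
  sup of the max-norm of A x over all x with max-norm 1.\<close>
definition mat_infnorm :: "real^'s^'r \<Rightarrow> real" where
  "mat_infnorm A = Sup {infnorm (A *v x) | x. infnorm x = 1}"

section \<open>The phase space C = C^0([-tau,0], R^m)\<close>

text \<open>Elements of C are represented as functions real => real^m that are continuous
  on [-tau,0] and vanish outside [-tau,0] (a canonical representative).\<close>
definition Cset :: "real \<Rightarrow> (real \<Rightarrow> real^'m) set" where
  "Cset tau = {u. continuous_on {-tau..0} u \<and> (\<forall>s. s \<notin> {-tau..0} \<longrightarrow> u s = 0)}"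

definition cnorm :: "real \<Rightarrow> (real \<Rightarrow> real^'m) \<Rightarrow> real" where
  "cnorm tau u = (SUP s\<in>{-tau..0}. infnorm (u s))"

text \<open>The segment y_t.\<close>
definition seg :: "real \<Rightarrow> (real \<Rightarrow> real^'m) \<Rightarrow> real \<Rightarrow> (real \<Rightarrow> real^'m)" where
  "seg tau y t = (\<lambda>s. if s \<in> {-tau..0} then y (t + s) else 0)"

text \<open>The constant function c_a.\<close>
definition cconst :: "real \<Rightarrow> real^'m \<Rightarrow> (real \<Rightarrow> real^'m)" where
  "cconst tau a = (\<lambda>s. if s \<in> {-tau..0} then a else 0)"

definition Cadd :: "(real \<Rightarrow> real^'m) \<Rightarrow> (real \<Rightarrow> real^'m) \<Rightarrow> (real \<Rightarrow> real^'m)" where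
  "Cadd u v = (\<lambda>s. u s + v s)"

definition Cdiff :: "(real \<Rightarrow> real^'m) \<Rightarrow> (real \<Rightarrow> real^'m) \<Rightarrow> (real \<Rightarrow> real^'m)" where
  "Cdiff u v = (\<lambda>s. u s - v s)"

definition Cscale :: "real \<Rightarrow> (real \<Rightarrow> real^'m) \<Rightarrow> (real \<Rightarrow> real^'m)" where
  "Cscale c u = (\<lambda>s. c *\<^sub>R u s)"

text \<open>Open subsets of C (w.r.t. the sup max-norm).\<close>
definition C_open :: "real \<Rightarrow> (real \<Rightarrow> real^'m) set \<Rightarrow> bool" where
  "C_open tau U \<longleftrightarrow> U \<subseteq> Cset tau \<and>
     (\<forall>u\<in>U. \<exists>e>0. \<forall>v\<in>Cset tau. cnorm tau (Cdiff v u) < e \<longrightarrow> v \<in> U)"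

section \<open>Higher Frechet derivatives in the second variable (generic)\<close>

text \<open>Setting: a vector space of directions V inside a type 'a, with addition pl,
  scalar multiplication sc and norm na; target normed by nb.
  A j-th derivative is represented as a function of a list of j directions.\<close>

definition ml_bounded ::
  "('a \<Rightarrow> 'a \<Rightarrow> 'a) \<Rightarrow> (real \<Rightarrow> 'a \<Rightarrow> 'a) \<Rightarrow> ('a \<Rightarrow> real) \<Rightarrow> ('b::real_vector \<Rightarrow> real)
    \<Rightarrow> 'a set \<Rightarrow> nat \<Rightarrow> ('a list \<Rightarrow> 'b) \<Rightarrow> bool" where
  "ml_bounded pl sc na nb V j M \<longleftrightarrow>
     (\<forall>hs i h h' c. length hs = j \<and> set hs \<subseteq> V \<and> i < j \<and> h \<in> V \<and> h' \<in> V \<longrightarrow>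
        M (hs[i := pl h h']) = M (hs[i := h]) + M (hs[i := h']) \<and>
        M (hs[i := sc c h]) = c *\<^sub>R M (hs[i := h])) \<and>
     (\<exists>B. \<forall>hs. length hs = j \<and> set hs \<subseteq> V \<longrightarrow> nb (M hs) \<le> B * prod_list (map na hs))"

text \<open>Operator norm of a j-linear map.\<close>
definition ml_norm ::
  "('a \<Rightarrow> real) \<Rightarrow> ('b \<Rightarrow> real) \<Rightarrow> 'a set \<Rightarrow> nat \<Rightarrow> ('a list \<Rightarrow> 'b) \<Rightarrow> real" where
  "ml_norm na nb V j M =
     Sup ({0} \<union> {nb (M hs) | hs. length hs = j \<and> set hs \<subseteq> V \<and> (\<forall>h\<in>set hs. na h \<le> 1)})"

text \<open>D is a family of derivatives D j t u of F t in the second variable up to order k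
  on S (a subset of real x V-part), with D 0 = F, each D (j+1) the Frechet derivative
  of D j (in operator norm), and all D j (j <= k) jointly continuous on S.\<close>
definition deriv_family ::
  "('a \<Rightarrow> 'a \<Rightarrow> 'a) \<Rightarrow> (real \<Rightarrow> 'a \<Rightarrow> 'a) \<Rightarrow> ('a \<Rightarrow> real) \<Rightarrow> ('b::real_vector \<Rightarrow> real)
    \<Rightarrow> 'a set \<Rightarrow> (real \<times> 'a) set \<Rightarrow> (real \<Rightarrow> 'a \<Rightarrow> 'b) \<Rightarrow> nat
    \<Rightarrow> (nat \<Rightarrow> real \<Rightarrow> 'a \<Rightarrow> 'a list \<Rightarrow> 'b) \<Rightarrow> bool" where
  "deriv_family pl sc na nb V S F k D \<longleftrightarrow>
     (\<forall>(t,u)\<in>S. D 0 t u [] = F t u) \<and>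
     (\<forall>j\<le>k. \<forall>(t,u)\<in>S. ml_bounded pl sc na nb V j (D j t u)) \<and>
     (\<forall>j<k. \<forall>(t,u)\<in>S. \<forall>e>0. \<exists>d>0. \<forall>h\<in>V. (t, pl u h) \<in> S \<and> na h < d \<longrightarrow>
         ml_norm na nb V j (\<lambda>hs. D j t (pl u h) hs - D j t u hs - D (Suc j) t u (h # hs))
           \<le> e * na h) \<and>
     (\<forall>j\<le>k. \<forall>(t,u)\<in>S. \<forall>e>0. \<exists>d>0. \<forall>s. \<forall>h\<in>V. (s, pl u h) \<in> S \<and> \<bar>s - t\<bar> < d \<and> na h < d \<longrightarrow>
         ml_norm na nb V j (\<lambda>hs. D j s (pl u h) hs - D j t u hs) < e)"

text \<open>C^{0,k}_b(S): continuous, k times continuously Frechet differentiable in the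
  second variable, derivatives of orders 1..k bounded on S.\<close>
definition C0kb ::
  "('a \<Rightarrow> 'a \<Rightarrow> 'a) \<Rightarrow> (real \<Rightarrow> 'a \<Rightarrow> 'a) \<Rightarrow> ('a \<Rightarrow> real) \<Rightarrow> ('b::real_vector \<Rightarrow> real)
    \<Rightarrow> 'a set \<Rightarrow> (real \<times> 'a) set \<Rightarrow> nat \<Rightarrow> (real \<Rightarrow> 'a \<Rightarrow> 'b) \<Rightarrow> bool" where
  "C0kb pl sc na nb V S k F \<longleftrightarrow>
     (\<exists>D. deriv_family pl sc na nb V S F k D \<and>
        (\<forall>j\<in>{1..k}. bdd_above {ml_norm na nb V j (D j t u) | t u. (t,u) \<in> S}))"

text \<open>C^k_b(X, R^q) for maps on an open subset of R^n (max-norm).\<close>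
definition Ckb :: "nat \<Rightarrow> (real^'n) set \<Rightarrow> (real^'n \<Rightarrow> real^'q) \<Rightarrow> bool" where
  "Ckb k X \<Psi> \<longleftrightarrow> C0kb (+) (*\<^sub>R) infnorm infnorm UNIV (UNIV \<times> X) k (\<lambda>_ x. \<Psi> x)"

section \<open>Solutions of the DDE\<close>

text \<open>y is a solution of y' = F(t, y_t), y_{t0} = u on [t0 - tau, t0 + c), c in (0, oo].\<close>
definition dde_solution ::
  "real \<Rightarrow> (real \<Rightarrow> (real \<Rightarrow> real^'m) \<Rightarrow> real^'m) \<Rightarrow> real set \<Rightarrow> (real \<Rightarrow> real^'m) set
    \<Rightarrow> real \<Rightarrow> (real \<Rightarrow> real^'m) \<Rightarrow> (real \<Rightarrow> real^'m) \<Rightarrow> ereal \<Rightarrow> bool" where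
  "dde_solution tau F Ot Oy t0 u y c \<longleftrightarrow>
     c > 0 \<and>
     continuous_on {t. t0 - tau \<le> t \<and> ereal t < ereal t0 + c} y \<and>
     seg tau y t0 = u \<and>
     (\<forall>t. t0 \<le> t \<and> ereal t < ereal t0 + c \<longrightarrow>
        t \<in> Ot \<and> seg tau y t \<in> Oy \<and>
        (y has_vector_derivative F t (seg tau y t)) (at t within {t0..}))"

end

theory Submission
  imports Defs
begin


lemma ml_norm_le:
  assumes "C \<ge> 0" "\<And>hs. length hs = j \<Longrightarrow> set hs \<subseteq> V \<Longrightarrow> (\<forall>h\<in>set hs. na h \<le> 1) \<Longrightarrow> nb (M hs) \<le> C"
  shows "ml_norm na nb V j M \<le> C"
  unfolding ml_norm_def by (rule cSup_least) (auto intro: assms)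

lemma ml_norm_ge:
  assumes "\<And>hs. length hs = j \<Longrightarrow> set hs \<subseteq> V \<Longrightarrow> (\<forall>h\<in>set hs. na h \<le> 1) \<Longrightarrow> nb (M hs) \<le> C"
   "length hs = j" "set hs \<subseteq> V" "\<forall>h\<in>set hs. na h \<le> 1"
  shows "nb (M hs) \<le> ml_norm na nb V j M"
proof -
  have b: "bdd_above ({0} \<union> {nb (M hs) | hs. length hs = j \<and> set hs \<subseteq> V \<and> (\<forall>h\<in>set hs. na h \<le> 1)})"
    by (rule bdd_aboveI[of _ "max C 0"]) (auto intro: max.coboundedI1 assms(1))
  show ?thesis unfolding ml_norm_def by (rule cSup_upper[OF _ b]) (use assms in auto)
qed

lemma ml_norm_nonneg:
  assumes "\<And>hs. length hs = j \<Longrightarrow> set hs \<subseteq> V \<Longrightarrow> (\<forall>h\<in>set hs. na h \<le> 1) \<Longrightarrow> nb (M hs) \<le> C"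
  shows "0 \<le> ml_norm na nb V j M"
proof -
  have b: "bdd_above ({0} \<union> {nb (M hs) | hs. length hs = j \<and> set hs \<subseteq> V \<and> (\<forall>h\<in>set hs. na h \<le> 1)})"
    by (rule bdd_aboveI[of _ "max C 0"]) (auto intro: max.coboundedI1 assms(1))
  show ?thesis unfolding ml_norm_def by (rule cSup_upper[OF _ b]) auto
qed

definition homog :: "nat \<Rightarrow> ('a::real_vector list \<Rightarrow> 'b::real_vector) \<Rightarrow> bool" where
  "homog j M \<longleftrightarrow> (\<forall>hs i c v. length hs = j \<and> i < j \<longrightarrow> M (hs[i := c *\<^sub>R v]) = c *\<^sub>R M (hs[i := v]))"

lemma homog_map:
  assumes "homog j M" "length hs = j"
  shows "M (map ((*\<^sub>R) c) hs) = c^j *\<^sub>R M hs"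
  using assms
proof (induction hs arbitrary: j M)
  case Nil
  then show ?case by simp
next
  case (Cons x xs)
  then obtain j' where j: "j = Suc j'" "length xs = j'" by auto
  have h': "homog j' (\<lambda>ys. M (x # ys))"
    unfolding homog_def
  proof (intro allI impI)
    fix hs :: "'a list" and i c v assume a: "length hs = j' \<and> i < j'"
    have "M ((x # hs)[Suc i := c *\<^sub>R v]) = c *\<^sub>R M ((x # hs)[Suc i := v])"
      using Cons.prems(1) a j unfolding homog_def by (metis length_Cons Suc_less_eq)
    then show "M (x # hs[i := c *\<^sub>R v]) = c *\<^sub>R M (x # hs[i := v])" by simp
  qed
  have "M (map ((*\<^sub>R) c) (x # xs)) = M ((x # map ((*\<^sub>R) c) xs)[0 := c *\<^sub>R x])" by simp
  also have "\<dots> = c *\<^sub>R M ((x # map ((*\<^sub>R) c) xs)[0 := x])"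
    using Cons.prems(1) j unfolding homog_def by (metis length_Cons length_map zero_less_Suc)
  also have "\<dots> = c *\<^sub>R (c^j' *\<^sub>R M (x # xs))"
    using Cons.IH[OF h' j(2)] by simp
  finally show ?case using j by simp
qed

lemma homog_bound:
  fixes M :: "'a::euclidean_space list \<Rightarrow> 'b::euclidean_space"
  assumes "homog j M" "\<And>hs. length hs = j \<Longrightarrow> \<forall>h\<in>set hs. infnorm h \<le> 1 \<Longrightarrow> infnorm (M hs) \<le> C"
    "length gs = j" "\<forall>g\<in>set gs. infnorm g \<le> r" "r > 0"
  shows "infnorm (M gs) \<le> r^j * C"
proof -
  let ?hs = "map ((*\<^sub>R) (1/r)) gs"
  have gs: "gs = map ((*\<^sub>R) r) ?hs" using assms(5) by (simp add: comp_def)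
  have "M gs = r^j *\<^sub>R M ?hs"
    using homog_map[OF assms(1), of ?hs r] assms(3) gs by simp
  moreover have "infnorm (M ?hs) \<le> C"
  proof (rule assms(2))
    show "length ?hs = j" using assms(3) by simp
    show "\<forall>h\<in>set ?hs. infnorm h \<le> 1"
      using assms(4,5) by (auto simp: infnorm_mul divide_le_eq)
  qed
  ultimately show ?thesis using assms(5)
    by (simp add: infnorm_mul mult_left_mono)
qed

lemma homog_ml_bound:
  fixes M :: "'a::euclidean_space list \<Rightarrow> 'b::euclidean_space"
  assumes "homog j M" "\<And>hs. length hs = j \<Longrightarrow> \<forall>h\<in>set hs. infnorm h \<le> 1 \<Longrightarrow> infnorm (M hs) \<le> C"
    "length gs = j" "\<forall>g\<in>set gs. infnorm g \<le> r" "r > 0"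
  shows "infnorm (M gs) \<le> r^j * ml_norm infnorm infnorm UNIV j M"
  by (rule homog_bound[OF assms(1) _ assms(3-5)], rule ml_norm_ge[where C=C]) (use assms(2) in auto)


lemma cnorm_bdd:
  assumes "h \<in> Cset tau"
  shows "bdd_above ((\<lambda>s. infnorm (h s)) ` {-tau..0})"
proof -
  have "compact (h ` {-tau..0})"
    using assms by (intro compact_continuous_image) (auto simp: Cset_def)
  then obtain b where "\<forall>x\<in>h ` {-tau..0}. norm x \<le> b"
    using compact_imp_bounded bounded_pos by metis
  then show ?thesis
    by (intro bdd_aboveI[of _ b]) (auto intro: order.trans[OF infnorm_le_norm])
qed

lemma cnorm_ge:
  assumes "h \<in> Cset tau" "s \<in> {-tau..0}"
  shows "infnorm (h s) \<le> cnorm tau h"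
  unfolding cnorm_def by (rule cSUP_upper[OF assms(2) cnorm_bdd[OF assms(1)]])

lemma cnorm_nonneg:
  assumes "h \<in> Cset tau" "tau \<ge> 0"
  shows "0 \<le> cnorm tau h"
  using cnorm_ge[OF assms(1), of 0] assms(2) infnorm_pos_le[of "h 0"] by auto

lemma Cset_add: "u \<in> Cset tau \<Longrightarrow> v \<in> Cset tau \<Longrightarrow> Cadd u v \<in> Cset tau"
  by (auto simp: Cset_def Cadd_def intro!: continuous_intros)

lemma Cset_scale: "u \<in> Cset tau \<Longrightarrow> Cscale c u \<in> Cset tau"
  by (auto simp: Cset_def Cscale_def intro!: continuous_intros)

lemma cnorm_const:
  assumes "tau \<ge> 0"
  shows "cnorm tau (Cdiff (cconst tau a) (cconst tau b)) = infnorm (a - b)"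
proof -
  have "cnorm tau (Cdiff (cconst tau a) (cconst tau b)) = (SUP s\<in>{-tau..0}. infnorm (a - b))"
    unfolding cnorm_def Cdiff_def cconst_def by (intro SUP_cong) auto
  also have "\<dots> = infnorm (a - b)" using assms by (intro cSUP_const) auto
  finally show ?thesis .
qed

lemma cconst_Cset: "cconst tau a \<in> Cset tau"
  by (auto simp: Cset_def cconst_def intro!: continuous_on_eq[OF continuous_on_const[of _ a]])

lemma prod_list_le1:
  assumes "\<forall>h\<in>set hs. 0 \<le> f h \<and> f h \<le> (1::real)"
  shows "prod_list (map f hs) \<le> 1 \<and> 0 \<le> prod_list (map f hs)"
  using assms by (induction hs) (auto intro: mult_le_one)

lemma prod_list_mono:
  assumes "\<forall>h\<in>set hs. 0 \<le> f h \<and> f h \<le> (g h::real)"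
  shows "prod_list (map f hs) \<le> prod_list (map g hs)"
  using assms
proof (induction hs)
  case (Cons a hs)
  have "0 \<le> prod_list (map f hs)" using Cons.prems
    by (induction hs) auto
  then show ?case using Cons by (auto intro!: mult_mono)
qed simp

lemma prod_list_nonneg:
  assumes "\<forall>h\<in>set hs. 0 \<le> (f h::real)"
  shows "0 \<le> prod_list (map f hs)"
  using assms by (induction hs) auto

lemma prod_list_scale:
  "prod_list (map (\<lambda>h. c * (f h::real)) hs) = c ^ length hs * prod_list (map f hs)"
  by (induction hs) auto


locale constr =
  fixes tau r rho Phimax :: real and X :: "(real^'n) set" and k :: nat
    and Psi :: "real^'n \<Rightarrow> real^'q"
    and DP :: "nat \<Rightarrow> real \<Rightarrow> real^'n \<Rightarrow> (real^'n) list \<Rightarrow> real^'q"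
    and phi :: "real \<Rightarrow> real" and Pm :: "real^'m^'n" and Em :: "real^'q^'m"
  assumes tau_pos: "tau > 0" and r_pos: "r > 0" and rho_pos: "rho > 0"
    and X_open: "open X"
    and DP: "deriv_family (+) (*\<^sub>R) infnorm infnorm UNIV (UNIV \<times> X) (\<lambda>_ x. Psi x) k DP"
    and DP_bdd: "\<forall>j\<in>{1..k}. bdd_above {ml_norm infnorm infnorm UNIV j (DP j t x) | t x. (t,x) \<in> UNIV \<times> X}"
    and phi_cont: "continuous_on UNIV phi" and phi_bd: "\<And>t. \<bar>phi t\<bar> \<le> Phimax"
    and Pm_bd: "\<And>z. infnorm (Pm *v z) \<le> r * infnorm z"
    and Em_bd: "\<And>z. infnorm (Em *v z) \<le> rho * infnorm z"
begin

definition ev :: "(real \<Rightarrow> real^'m) \<Rightarrow> real^'n" where "ev u = Pm *v u (-tau)"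
definition Oy :: "(real \<Rightarrow> real^'m) set" where "Oy = {u \<in> Cset tau. ev u \<in> X}"
definition Lf :: "nat \<Rightarrow> (real \<Rightarrow> real^'m) \<Rightarrow> (real \<Rightarrow> real^'m) list \<Rightarrow> real^'m" where
  "Lf j u hs = (if j = 0 then u (-tau) else if j = 1 then hd hs (-tau) else 0)"
definition Df :: "nat \<Rightarrow> real \<Rightarrow> (real \<Rightarrow> real^'m) \<Rightarrow> (real \<Rightarrow> real^'m) list \<Rightarrow> real^'m" where
  "Df j t u hs = phi t *\<^sub>R (Em *v DP j 0 (ev u) (map ev hs) - Lf j u hs)"
definition Ff :: "real \<Rightarrow> (real \<Rightarrow> real^'m) \<Rightarrow> real^'m" where "Ff t u = Df 0 t u []"

lemma DP0: "x \<in> X \<Longrightarrow> DP 0 t x [] = Psi x"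
  using DP unfolding deriv_family_def by auto

lemma DPb: "j \<le> k \<Longrightarrow> x \<in> X \<Longrightarrow> ml_bounded (+) (*\<^sub>R) infnorm infnorm UNIV j (DP j t x)"
  using DP unfolding deriv_family_def by auto

lemma DPd: "j < k \<Longrightarrow> x \<in> X \<Longrightarrow> e > 0 \<Longrightarrow> \<exists>d>0. \<forall>h. x + h \<in> X \<and> infnorm h < d \<longrightarrow>
   ml_norm infnorm infnorm UNIV j (\<lambda>hs. DP j t (x + h) hs - DP j t x hs - DP (Suc j) t x (h # hs)) \<le> e * infnorm h"
  using DP unfolding deriv_family_def by fastforce

lemma DPc: "j \<le> k \<Longrightarrow> x \<in> X \<Longrightarrow> e > 0 \<Longrightarrow> \<exists>d>0. \<forall>s h. x + h \<in> X \<and> \<bar>s - t\<bar> < d \<and> infnorm h < d \<longrightarrow>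
   ml_norm infnorm infnorm UNIV j (\<lambda>hs. DP j s (x + h) hs - DP j t x hs) < e"
  using DP unfolding deriv_family_def by fastforce

lemma mlb_add: "ml_bounded (+) (*\<^sub>R) infnorm infnorm UNIV j M \<Longrightarrow> length hs = j \<Longrightarrow> i < j \<Longrightarrow>
   M (hs[i := a + b]) = M (hs[i := a]) + M (hs[i := b])"
  unfolding ml_bounded_def by auto

lemma mlb_homog: "ml_bounded (+) (*\<^sub>R) infnorm infnorm UNIV j M \<Longrightarrow> homog j M"
  unfolding ml_bounded_def homog_def by auto

lemma mlb_bound: "ml_bounded (+) (*\<^sub>R) infnorm infnorm UNIV j M \<Longrightarrow>
   \<exists>B. \<forall>hs. length hs = j \<longrightarrow> infnorm (M hs) \<le> B * prod_list (map infnorm hs)"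
  unfolding ml_bounded_def by auto

lemma mlb_adm: "ml_bounded (+) (*\<^sub>R) infnorm infnorm UNIV j M \<Longrightarrow>
   \<exists>C. \<forall>hs. length hs = j \<longrightarrow> (\<forall>h\<in>set hs. infnorm h \<le> 1) \<longrightarrow> infnorm (M hs) \<le> C"
proof -
  assume "ml_bounded (+) (*\<^sub>R) infnorm infnorm UNIV j M"
  then obtain B where B: "\<forall>hs. length hs = j \<longrightarrow> infnorm (M hs) \<le> B * prod_list (map infnorm hs)"
    using mlb_bound by blast
  have "infnorm (M hs) \<le> \<bar>B\<bar>" if "length hs = j" "\<forall>h\<in>set hs. infnorm h \<le> 1" for hs
  proof -
    have p: "prod_list (map infnorm hs) \<le> 1 \<and> 0 \<le> prod_list (map infnorm hs)"
      using that(2) by (intro prod_list_le1) (auto simp: infnorm_pos_le)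
    have "B * prod_list (map infnorm hs) \<le> \<bar>B\<bar>"
      using p by (smt (verit) abs_ge_self mult_left_le mult_nonneg_nonneg mult_nonpos_nonneg)
    moreover have "infnorm (M hs) \<le> B * prod_list (map infnorm hs)" using B that(1) by blast
    ultimately show ?thesis by linarith
  qed
  then show ?thesis by blast
qed

lemma ev_add: "ev (Cadd u h) = ev u + ev h"
  unfolding ev_def Cadd_def by (simp add: matrix_vector_right_distrib)

lemma ev_scale: "ev (Cscale c h) = c *\<^sub>R ev h"
  unfolding ev_def Cscale_def by (simp add: matrix_vector_mult_scaleR)

lemma ev_bd: "h \<in> Cset tau \<Longrightarrow> infnorm (ev h) \<le> r * cnorm tau h"
  unfolding ev_def using Pm_bd[of "h (-tau)"] cnorm_ge[of h tau "-tau"] tau_pos r_pos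
  by (smt (verit, best) atLeastAtMost_iff mult_left_mono)

lemma cn_nn: "h \<in> Cset tau \<Longrightarrow> 0 \<le> cnorm tau h"
  using cnorm_nonneg[of h tau] tau_pos by auto

lemma cn_ge: "h \<in> Cset tau \<Longrightarrow> infnorm (h (-tau)) \<le> cnorm tau h"
  using cnorm_ge[of h tau "-tau"] tau_pos by auto

lemma C_open_Oy: "C_open tau Oy"
  unfolding C_open_def
proof (intro conjI ballI)
  show "Oy \<subseteq> Cset tau" by (auto simp: Oy_def)
  fix u assume u: "u \<in> Oy"
  then have "ev u \<in> X" "u \<in> Cset tau" by (auto simp: Oy_def)
  then obtain e where e: "e > 0" "ball (ev u) e \<subseteq> X" using X_open open_contains_ball by blast
  define d where "d = e / (sqrt (real CARD('n)) * r + 1)"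
  have dpos: "d > 0" using e r_pos by (auto simp: d_def intro!: divide_pos_pos add_nonneg_pos)
  show "\<exists>e>0. \<forall>v\<in>Cset tau. cnorm tau (Cdiff v u) < e \<longrightarrow> v \<in> Oy"
  proof (intro exI[of _ d] conjI dpos ballI impI)
    fix v assume v: "v \<in> Cset tau" "cnorm tau (Cdiff v u) < d"
    have cd: "Cdiff v u \<in> Cset tau" using v(1) \<open>u \<in> Cset tau\<close>
      by (auto simp: Cset_def Cdiff_def intro!: continuous_intros)
    have evd: "ev v - ev u = ev (Cdiff v u)"
      unfolding ev_def Cdiff_def by (simp add: matrix_vector_mult_diff_distrib)
    have "norm (ev v - ev u) \<le> sqrt (real CARD('n)) * infnorm (ev v - ev u)"
      using norm_le_infnorm[of "ev v - ev u"] by simp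
    also have "\<dots> \<le> sqrt (real CARD('n)) * (r * cnorm tau (Cdiff v u))"
      using ev_bd[OF cd] evd by (simp add: mult_left_mono)
    also have "\<dots> \<le> sqrt (real CARD('n)) * r * d"
      using v(2) r_pos by (simp add: mult_left_mono)
    also have "\<dots> < e"
    proof -
      have "sqrt (real CARD('n)) * r * d < (sqrt (real CARD('n)) * r + 1) * d" using dpos by simp
      also have "\<dots> = e"
      proof -
        have "sqrt (real CARD('n)) * r + 1 > 0" using r_pos by (simp add: add_nonneg_pos)
        then show ?thesis unfolding d_def by simp
      qed
      finally show ?thesis .
    qed
    finally have "ev v \<in> ball (ev u) e" by (simp add: dist_norm norm_minus_commute)
    then show "v \<in> Oy" using e v(1) by (auto simp: Oy_def)
  qed
qed

end


context constr begin

lemma Lf_add: "length hs = j \<Longrightarrow> i < j \<Longrightarrow>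
  Lf j u (hs[i := Cadd h h']) = Lf j u (hs[i:=h]) + Lf j u (hs[i:=h'])"
proof (cases "j = 1")
  case True
  assume "length hs = j" "i < j"
  then obtain a where "hs = [a]" "i = 0" using True by (cases hs) auto
  then show ?thesis using True by (simp add: Lf_def Cadd_def)
qed (auto simp: Lf_def)

lemma Lf_scale: "length hs = j \<Longrightarrow> i < j \<Longrightarrow>
  Lf j u (hs[i := Cscale c h]) = c *\<^sub>R Lf j u (hs[i:=h])"
proof (cases "j = 1")
  case True
  assume "length hs = j" "i < j"
  then obtain a where "hs = [a]" "i = 0" using True by (cases hs) auto
  then show ?thesis using True by (simp add: Lf_def Cscale_def)
qed (auto simp: Lf_def)

lemma Lf_bd: assumes "length hs = j" "set hs \<subseteq> Cset tau"
  shows "infnorm (Lf j u hs) \<le> (infnorm (u (-tau)) + 1) * prod_list (map (cnorm tau) hs)"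
proof -
  have P: "0 \<le> prod_list (map (cnorm tau) hs)"
    using assms(2) by (intro prod_list_nonneg) (auto intro: cn_nn)
  have I: "0 \<le> infnorm (u (-tau))" by (rule infnorm_pos_le)
  consider "j = 0" | "j = 1" | "j \<ge> 2" by linarith
  then show ?thesis
  proof cases
    case 1 then show ?thesis using assms by (simp add: Lf_def)
  next
    case 2
    then obtain a where a: "hs = [a]" using assms(1) by (cases hs) auto
    then have "a \<in> Cset tau" using assms(2) by auto
    then have "infnorm (a (-tau)) \<le> cnorm tau a" "0 \<le> cnorm tau a" using cn_ge cn_nn by auto
    moreover have "0 \<le> infnorm (u (-tau)) * cnorm tau a" using I \<open>0 \<le> cnorm tau a\<close> by simp
    ultimately show ?thesis using a 2
      by (simp add: Lf_def distrib_right)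
  next
    case 3 then show ?thesis using P I by (simp add: Lf_def infnorm_0)
  qed
qed

lemma Lf_adm: assumes "length hs = j" "set hs \<subseteq> Cset tau" "\<forall>h\<in>set hs. cnorm tau h \<le> 1" "j \<ge> 1"
  shows "infnorm (Lf j u hs) \<le> 1"
proof (cases "j = 1")
  case True
  then obtain a where a: "hs = [a]" using assms(1) by (cases hs) auto
  then have "a \<in> Cset tau" "cnorm tau a \<le> 1" using assms(2,3) by auto
  then show ?thesis using a True cn_ge[of a] by (simp add: Lf_def)
qed (use assms in \<open>auto simp: Lf_def infnorm_0\<close>)

lemma Em_diff_bd: "infnorm (Em *v a - b) \<le> rho * infnorm a + infnorm b"
  using infnorm_triangle[of "Em *v a" "- b"] Em_bd[of a] by (simp add: infnorm_neg)

lemma prod_ev: assumes "set hs \<subseteq> Cset tau"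
  shows "prod_list (map infnorm (map ev hs)) \<le> r ^ length hs * prod_list (map (cnorm tau) hs)"
proof -
  have "prod_list (map infnorm (map ev hs)) = prod_list (map (\<lambda>h. infnorm (ev h)) hs)" by (simp add: comp_def)
  also have "\<dots> \<le> prod_list (map (\<lambda>h. r * cnorm tau h) hs)"
    using assms by (intro prod_list_mono) (auto intro: ev_bd infnorm_pos_le)
  also have "\<dots> = r ^ length hs * prod_list (map (cnorm tau) hs)" by (rule prod_list_scale)
  finally show ?thesis .
qed

lemma Df_mlb: assumes "u \<in> Oy" "j \<le> k"
  shows "ml_bounded Cadd Cscale (cnorm tau) infnorm (Cset tau) j (Df j t u)"
proof -
  have x0: "ev u \<in> X" using assms(1) by (auto simp: Oy_def)
  have mlb: "ml_bounded (+) (*\<^sub>R) infnorm infnorm UNIV j (DP j 0 (ev u))"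
    using DPb[OF assms(2) x0] .
  have lin: "Df j t u (hs[i := Cadd h h']) = Df j t u (hs[i := h]) + Df j t u (hs[i := h']) \<and>
        Df j t u (hs[i := Cscale c h]) = c *\<^sub>R Df j t u (hs[i := h])"
    if "length hs = j" "set hs \<subseteq> Cset tau" "i < j" "h \<in> Cset tau" "h' \<in> Cset tau" for hs i h h' c
  proof
    have lm: "length (map ev hs) = j" using that by simp
    show "Df j t u (hs[i := Cadd h h']) = Df j t u (hs[i := h]) + Df j t u (hs[i := h'])"
      unfolding Df_def using mlb_add[OF mlb lm that(3), of "ev h" "ev h'"] Lf_add[OF that(1,3), of u h h']
      by (simp add: map_update ev_add algebra_simps)
    have hm: "homog j (DP j 0 (ev u))" by (rule mlb_homog[OF mlb])
    have "DP j 0 (ev u) ((map ev hs)[i := c *\<^sub>R ev h]) = c *\<^sub>R DP j 0 (ev u) ((map ev hs)[i := ev h])"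
      using hm lm that(3) unfolding homog_def by blast
    then show "Df j t u (hs[i := Cscale c h]) = c *\<^sub>R Df j t u (hs[i := h])"
      unfolding Df_def using Lf_scale[OF that(1,3), of u c h]
      by (simp add: map_update ev_scale algebra_simps)
  qed
  obtain B0 where B0: "\<forall>gs. length gs = j \<longrightarrow> infnorm (DP j 0 (ev u) gs) \<le> B0 * prod_list (map infnorm gs)"
    using mlb_bound[OF mlb] by blast
  define B where "B = \<bar>phi t\<bar> * (rho * \<bar>B0\<bar> * r^j + infnorm (u (-tau)) + 1)"
  have bd: "infnorm (Df j t u hs) \<le> B * prod_list (map (cnorm tau) hs)"
    if "length hs = j" "set hs \<subseteq> Cset tau" for hs
  proof -
    let ?P = "prod_list (map (cnorm tau) hs)"
    have P: "0 \<le> ?P" using that(2) by (intro prod_list_nonneg) (auto intro: cn_nn)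
    have Q: "0 \<le> prod_list (map infnorm (map ev hs))"
      by (intro prod_list_nonneg) (auto intro: infnorm_pos_le)
    have "infnorm (DP j 0 (ev u) (map ev hs)) \<le> B0 * prod_list (map infnorm (map ev hs))"
      using B0 that(1) by (metis length_map)
    also have "\<dots> \<le> \<bar>B0\<bar> * prod_list (map infnorm (map ev hs))"
      using Q by (simp add: mult_right_mono)
    also have "\<dots> \<le> \<bar>B0\<bar> * (r^j * ?P)"
      using prod_ev[OF that(2)] that(1) by (simp add: mult_left_mono)
    finally have a: "infnorm (DP j 0 (ev u) (map ev hs)) \<le> \<bar>B0\<bar> * (r^j * ?P)" .
    have "infnorm (Df j t u hs) = \<bar>phi t\<bar> * infnorm (Em *v DP j 0 (ev u) (map ev hs) - Lf j u hs)"
      unfolding Df_def by (simp add: infnorm_mul)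
    also have "\<dots> \<le> \<bar>phi t\<bar> * (rho * (\<bar>B0\<bar> * (r^j * ?P)) + (infnorm (u (-tau)) + 1) * ?P)"
    proof (intro mult_left_mono abs_ge_zero)
      have "rho * infnorm (DP j 0 (ev u) (map ev hs)) \<le> rho * (\<bar>B0\<bar> * (r^j * ?P))"
        using a rho_pos by (simp add: mult_left_mono)
      then show "infnorm (Em *v DP j 0 (ev u) (map ev hs) - Lf j u hs) \<le> rho * (\<bar>B0\<bar> * (r^j * ?P)) + (infnorm (u (-tau)) + 1) * ?P"
        using Em_diff_bd[of "DP j 0 (ev u) (map ev hs)" "Lf j u hs"] Lf_bd[OF that, of u] by linarith
    qed
    also have "\<dots> = B * ?P" unfolding B_def by (simp add: algebra_simps)
    finally show ?thesis .
  qed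
  show ?thesis unfolding ml_bounded_def using lin bd by blast
qed

end


definition admb :: "nat \<Rightarrow> ('a::euclidean_space list \<Rightarrow> 'b::euclidean_space) \<Rightarrow> bool" where
  "admb j M \<longleftrightarrow> (\<exists>C. \<forall>hs. length hs = j \<longrightarrow> (\<forall>h\<in>set hs. infnorm h \<le> 1) \<longrightarrow> infnorm (M hs) \<le> C)"

lemma homog_diff: "homog j A \<Longrightarrow> homog j B \<Longrightarrow> homog j (\<lambda>gs. A gs - B gs)"
  unfolding homog_def by (simp add: algebra_simps)

lemma homog_cons: "homog (Suc j) A \<Longrightarrow> homog j (\<lambda>gs. A (g # gs))"
  unfolding homog_def
proof (intro allI impI)
  fix hs :: "'a list" and i c v
  assume a1: "\<forall>hs i c v. length hs = Suc j \<and> i < Suc j \<longrightarrow> A (hs[i := c *\<^sub>R v]) = c *\<^sub>R A (hs[i := v])"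
    and a2: "length hs = j \<and> i < j"
  then have "A ((g # hs)[Suc i := c *\<^sub>R v]) = c *\<^sub>R A ((g # hs)[Suc i := v])"
    using a1[rule_format, of "g # hs" "Suc i" c v] a2 by simp
  then show "A (g # hs[i := c *\<^sub>R v]) = c *\<^sub>R A (g # hs[i := v])" by simp
qed

lemma admb_diff: "admb j A \<Longrightarrow> admb j B \<Longrightarrow> admb j (\<lambda>gs. A gs - B gs)"
  unfolding admb_def
proof -
  assume "\<exists>C. \<forall>hs. length hs = j \<longrightarrow> (\<forall>h\<in>set hs. infnorm h \<le> 1) \<longrightarrow> infnorm (A hs) \<le> C"
    "\<exists>C. \<forall>hs. length hs = j \<longrightarrow> (\<forall>h\<in>set hs. infnorm h \<le> 1) \<longrightarrow> infnorm (B hs) \<le> C"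
  then obtain C1 C2 where "\<forall>hs. length hs = j \<longrightarrow> (\<forall>h\<in>set hs. infnorm h \<le> 1) \<longrightarrow> infnorm (A hs) \<le> C1"
    "\<forall>hs. length hs = j \<longrightarrow> (\<forall>h\<in>set hs. infnorm h \<le> 1) \<longrightarrow> infnorm (B hs) \<le> C2" by blast
  note C = this
  then show "\<exists>C. \<forall>hs. length hs = j \<longrightarrow> (\<forall>h\<in>set hs. infnorm h \<le> 1) \<longrightarrow> infnorm (A hs - B hs) \<le> C"
  proof (intro exI[of _ "C1 + C2"] allI impI)
    fix hs :: "'a list" assume "length hs = j" "\<forall>h\<in>set hs. infnorm h \<le> 1"
    then have "infnorm (A hs) \<le> C1" "infnorm (B hs) \<le> C2" using C by auto
    moreover have "infnorm (A hs - B hs) \<le> infnorm (A hs) + infnorm (B hs)"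
      using infnorm_triangle[of "A hs" "- B hs"] by (simp add: infnorm_neg)
    ultimately show "infnorm (A hs - B hs) \<le> C1 + C2" by linarith
  qed
qed

context constr begin

lemma admb_mlb: "ml_bounded (+) (*\<^sub>R) infnorm infnorm UNIV j M \<Longrightarrow> admb j M"
  unfolding admb_def using mlb_adm by blast

lemma admb_cons: assumes "ml_bounded (+) (*\<^sub>R) infnorm infnorm UNIV (Suc j) M"
  shows "admb j (\<lambda>gs. M (g # gs))"
proof -
  obtain B where B: "\<forall>hs. length hs = Suc j \<longrightarrow> infnorm (M hs) \<le> B * prod_list (map infnorm hs)"
    using mlb_bound[OF assms] by blast
  have "infnorm (M (g # hs)) \<le> \<bar>B\<bar> * infnorm g" if "length hs = j" "\<forall>h\<in>set hs. infnorm h \<le> 1" for hs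
  proof -
    have p: "prod_list (map infnorm hs) \<le> 1 \<and> 0 \<le> prod_list (map infnorm hs)"
      using that(2) by (intro prod_list_le1) (auto simp: infnorm_pos_le)
    have "infnorm (M (g # hs)) \<le> B * (infnorm g * prod_list (map infnorm hs))"
      using B[rule_format, of "g # hs"] that(1) by simp
    also have "\<dots> \<le> \<bar>B\<bar> * (infnorm g * prod_list (map infnorm hs))"
      using p by (intro mult_right_mono) (auto simp: infnorm_pos_le)
    also have "\<dots> \<le> \<bar>B\<bar> * infnorm g"
      using p by (intro mult_left_mono) (auto simp: infnorm_pos_le mult_left_le)
    finally show ?thesis .
  qed
  then show ?thesis unfolding admb_def by blast
qed

lemma map_ev_bd: "set hs \<subseteq> Cset tau \<Longrightarrow> \<forall>h\<in>set hs. cnorm tau h \<le> 1 \<Longrightarrow> \<forall>g\<in>set (map ev hs). infnorm g \<le> r"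
proof
  fix g assume "set hs \<subseteq> Cset tau" "\<forall>h\<in>set hs. cnorm tau h \<le> 1" "g \<in> set (map ev hs)"
  then obtain h where h: "h \<in> Cset tau" "cnorm tau h \<le> 1" "g = ev h" by auto
  have "r * cnorm tau h \<le> r" using h(2) r_pos by (simp add: mult_left_le)
  then show "infnorm g \<le> r" unfolding h(3) using ev_bd[OF h(1)] by linarith
qed

lemma admb_ml_bound:
  fixes M :: "(real^'n) list \<Rightarrow> real^'q"
  assumes "homog j M" "admb j M" "length hs = j" "set hs \<subseteq> Cset tau" "\<forall>h\<in>set hs. cnorm tau h \<le> 1"
  shows "infnorm (M (map ev hs)) \<le> r^j * ml_norm infnorm infnorm UNIV j M"
proof -
  obtain C where C: "\<forall>hs. length hs = j \<longrightarrow> (\<forall>h\<in>set hs. infnorm h \<le> 1) \<longrightarrow> infnorm (M hs) \<le> C"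
    using assms(2) unfolding admb_def by blast
  show ?thesis
    by (rule homog_ml_bound[OF assms(1), where C=C]) (use C assms(3) map_ev_bd[OF assms(4,5)] r_pos in auto)
qed

lemma Lf_deriv: "Lf j (Cadd u h) hs - Lf j u hs - Lf (Suc j) u (h # hs) = 0"
  by (simp add: Lf_def Cadd_def)

lemma Df_deriv: assumes "u \<in> Oy" "j < k" "e > 0"
  shows "\<exists>d>0. \<forall>h\<in>Cset tau. (t, Cadd u h) \<in> UNIV \<times> Oy \<and> cnorm tau h < d \<longrightarrow>
     ml_norm (cnorm tau) infnorm (Cset tau) j (\<lambda>hs. Df j t (Cadd u h) hs - Df j t u hs - Df (Suc j) t u (h # hs))
       \<le> e * cnorm tau h"
proof -
  let ?x0 = "ev u"
  have x0: "?x0 \<in> X" using assms(1) by (auto simp: Oy_def)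
  define A where "A = \<bar>phi t\<bar> * rho * r^(Suc j)"
  have A: "A \<ge> 0" using rho_pos r_pos by (simp add: A_def)
  define e' where "e' = e / (A + 1)"
  have e': "e' > 0" using A assms(3) by (simp add: e'_def)
  obtain d' where d': "d' > 0" "\<forall>g. ?x0 + g \<in> X \<and> infnorm g < d' \<longrightarrow>
     ml_norm infnorm infnorm UNIV j (\<lambda>gs. DP j 0 (?x0 + g) gs - DP j 0 ?x0 gs - DP (Suc j) 0 ?x0 (g # gs)) \<le> e' * infnorm g"
    using DPd[OF assms(2) x0 e'] by blast
  show ?thesis
  proof (intro exI[of _ "d' / r"] conjI ballI impI)
    show "d' / r > 0" using d' r_pos by simp
    fix h assume h: "h \<in> Cset tau" "(t, Cadd u h) \<in> UNIV \<times> Oy \<and> cnorm tau h < d' / r"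
    let ?g = "ev h"
    have g: "infnorm ?g < d'"
    proof -
      have "r * cnorm tau h < r * (d' / r)" using h(2) r_pos by (intro mult_strict_left_mono) auto
      then show ?thesis using ev_bd[OF h(1)] r_pos by simp
    qed
    have xg: "?x0 + ?g \<in> X" using h(2) by (auto simp: Oy_def ev_add)
    let ?D = "\<lambda>gs. DP j 0 (?x0 + ?g) gs - DP j 0 ?x0 gs - DP (Suc j) 0 ?x0 (?g # gs)"
    have mn: "ml_norm infnorm infnorm UNIV j ?D \<le> e' * infnorm ?g" using d'(2) g xg by blast
    have m1: "ml_bounded (+) (*\<^sub>R) infnorm infnorm UNIV j (DP j 0 (?x0 + ?g))" using DPb assms(2) xg by simp
    have m2: "ml_bounded (+) (*\<^sub>R) infnorm infnorm UNIV j (DP j 0 ?x0)" using DPb assms(2) x0 by simp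
    have m3: "ml_bounded (+) (*\<^sub>R) infnorm infnorm UNIV (Suc j) (DP (Suc j) 0 ?x0)" using DPb assms(2) x0 by simp
    have hD: "homog j ?D"
      by (rule homog_diff[OF homog_diff[OF mlb_homog[OF m1] mlb_homog[OF m2]] homog_cons[OF mlb_homog[OF m3]]])
    have aD: "admb j ?D"
      by (rule admb_diff[OF admb_diff[OF admb_mlb[OF m1] admb_mlb[OF m2]] admb_cons[OF m3]])
    show "ml_norm (cnorm tau) infnorm (Cset tau) j (\<lambda>hs. Df j t (Cadd u h) hs - Df j t u hs - Df (Suc j) t u (h # hs))
       \<le> e * cnorm tau h"
    proof (rule ml_norm_le)
      show "0 \<le> e * cnorm tau h" using cn_nn[OF h(1)] assms(3) by simp
      fix hs :: "(real \<Rightarrow> real^'m) list" assume hs: "length hs = j" "set hs \<subseteq> Cset tau" "\<forall>h\<in>set hs. cnorm tau h \<le> 1"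
      have eq: "Df j t (Cadd u h) hs - Df j t u hs - Df (Suc j) t u (h # hs) = phi t *\<^sub>R (Em *v ?D (map ev hs))"
      proof -
        have "Df j t (Cadd u h) hs - Df j t u hs - Df (Suc j) t u (h # hs) =
          phi t *\<^sub>R (Em *v ?D (map ev hs)) - phi t *\<^sub>R (Lf j (Cadd u h) hs - Lf j u hs - Lf (Suc j) u (h # hs))"
          unfolding Df_def by (simp add: ev_add algebra_simps)
        then show ?thesis by (simp add: Lf_deriv)
      qed
      have "infnorm (?D (map ev hs)) \<le> r^j * ml_norm infnorm infnorm UNIV j ?D"
        by (rule admb_ml_bound[OF hD aD hs])
      also have "\<dots> \<le> r^j * (e' * (r * cnorm tau h))"
      proof -
        have "e' * infnorm ?g \<le> e' * (r * cnorm tau h)" using ev_bd[OF h(1)] e' by (simp add: mult_left_mono)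
        then show ?thesis using mn r_pos by (intro mult_left_mono) auto
      qed
      finally have Db: "infnorm (?D (map ev hs)) \<le> r^j * (e' * (r * cnorm tau h))" .
      have "infnorm (Df j t (Cadd u h) hs - Df j t u hs - Df (Suc j) t u (h # hs))
          \<le> \<bar>phi t\<bar> * (rho * infnorm (?D (map ev hs)))"
        unfolding eq infnorm_mul using Em_bd by (intro mult_left_mono) auto
      also have "\<dots> \<le> \<bar>phi t\<bar> * (rho * (r^j * (e' * (r * cnorm tau h))))"
        using Db rho_pos by (intro mult_left_mono) auto
      also have "\<dots> = A * e' * cnorm tau h" unfolding A_def by (simp add: algebra_simps)
      also have "\<dots> \<le> e * cnorm tau h"
      proof (rule mult_right_mono)
        show "A * e' \<le> e" using A assms(3) unfolding e'_def by (simp add: field_simps)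
      qed (rule cn_nn[OF h(1)])
      finally show "infnorm (Df j t (Cadd u h) hs - Df j t u hs - Df (Suc j) t u (h # hs)) \<le> e * cnorm tau h" .
    qed
  qed
qed

end


context constr begin

lemma Lf_diff: "h \<in> Cset tau \<Longrightarrow> infnorm (Lf j (Cadd u h) hs - Lf j u hs) \<le> cnorm tau h"
  using cn_ge[of h] cn_nn[of h] by (auto simp: Lf_def Cadd_def infnorm_0)

lemma Lf_adm0: assumes "length hs = j" "set hs \<subseteq> Cset tau" "\<forall>h\<in>set hs. cnorm tau h \<le> 1"
  shows "infnorm (Lf j u hs) \<le> infnorm (u (-tau)) + 1"
proof -
  have p: "prod_list (map (cnorm tau) hs) \<le> 1 \<and> 0 \<le> prod_list (map (cnorm tau) hs)"
    using assms(2,3) by (intro prod_list_le1) (auto intro: cn_nn)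
  have "(infnorm (u (-tau)) + 1) * prod_list (map (cnorm tau) hs) \<le> infnorm (u (-tau)) + 1"
    using p infnorm_pos_le[of "u (-tau)"] by (simp add: mult_left_le)
  then show ?thesis using Lf_bd[OF assms(1,2), of u] by linarith
qed

lemma DP_hom_adm: "j \<le> k \<Longrightarrow> x \<in> X \<Longrightarrow> homog j (DP j t x) \<and> admb j (DP j t x)"
  using DPb mlb_homog admb_mlb by blast

lemma DP_ml_nonneg: "j \<le> k \<Longrightarrow> x \<in> X \<Longrightarrow> 0 \<le> ml_norm infnorm infnorm UNIV j (DP j t x)"
proof -
  assume a: "j \<le> k" "x \<in> X"
  then obtain C where C: "\<forall>hs. length hs = j \<longrightarrow> (\<forall>h\<in>set hs. infnorm h \<le> 1) \<longrightarrow> infnorm (DP j t x hs) \<le> C"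
    using DP_hom_adm unfolding admb_def by blast
  show ?thesis by (rule ml_norm_nonneg[where C=C]) (use C in auto)
qed

lemma phi_cont_at: "e > 0 \<Longrightarrow> \<exists>d>0. \<forall>s. \<bar>s - t\<bar> < d \<longrightarrow> \<bar>phi s - phi t\<bar> < e"
  using phi_cont unfolding continuous_on_iff by (auto simp: dist_real_def)

lemma Df_cont: assumes "u \<in> Oy" "j \<le> k" "e > 0"
  shows "\<exists>d>0. \<forall>s. \<forall>h\<in>Cset tau. (s, Cadd u h) \<in> UNIV \<times> Oy \<and> \<bar>s - t\<bar> < d \<and> cnorm tau h < d \<longrightarrow>
     ml_norm (cnorm tau) infnorm (Cset tau) j (\<lambda>hs. Df j s (Cadd u h) hs - Df j t u hs) < e"
proof -
  let ?x0 = "ev u"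
  have x0: "?x0 \<in> X" using assms(1) by (auto simp: Oy_def)
  define M0 where "M0 = DP j 0 ?x0"
  define N0 where "N0 = ml_norm infnorm infnorm UNIV j M0"
  have N0: "0 \<le> N0" unfolding N0_def M0_def by (rule DP_ml_nonneg[OF assms(2) x0])
  define A where "A = \<bar>phi t\<bar> * rho * r^j"
  have A: "0 \<le> A" using rho_pos r_pos by (simp add: A_def)
  define Bu where "Bu = rho * r^j * (N0 + 1) + infnorm (u (-tau)) + 2"
  have Bu: "Bu > 0" unfolding Bu_def using rho_pos r_pos N0 infnorm_pos_le[of "u (-tau)"]
    by (simp add: add_nonneg_pos)
  define e1 where "e1 = min 1 (e / (4 * (A + 1)))"
  have e1: "0 < e1" "e1 \<le> 1" "A * e1 \<le> e / 4"
  proof -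
    show "0 < e1" "e1 \<le> 1" using A assms(3) by (auto simp: e1_def)
    have "A * e1 \<le> A * (e / (4 * (A + 1)))" using A by (intro mult_left_mono) (auto simp: e1_def)
    also have "\<dots> \<le> e / 4" using A assms(3) by (simp add: field_simps)
    finally show "A * e1 \<le> e / 4" .
  qed
  obtain d1 where d1: "d1 > 0" "\<forall>s' g. ?x0 + g \<in> X \<and> \<bar>s' - 0\<bar> < d1 \<and> infnorm g < d1 \<longrightarrow>
     ml_norm infnorm infnorm UNIV j (\<lambda>gs. DP j s' (?x0 + g) gs - DP j 0 ?x0 gs) < e1"
    using DPc[OF assms(2) x0 e1(1), of 0] by blast
  obtain d2 where d2: "d2 > 0" "\<forall>s. \<bar>s - t\<bar> < d2 \<longrightarrow> \<bar>phi s - phi t\<bar> < e / (4 * Bu)"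
    using phi_cont_at[of "e / (4 * Bu)" t] Bu assms(3) by auto
  define d3 where "d3 = min 1 (e / (4 * (\<bar>phi t\<bar> + 1)))"
  have d3: "0 < d3" "d3 \<le> 1" "\<bar>phi t\<bar> * d3 \<le> e / 4"
  proof -
    show "0 < d3" "d3 \<le> 1" using assms(3) by (auto simp: d3_def)
    have "\<bar>phi t\<bar> * d3 \<le> \<bar>phi t\<bar> * (e / (4 * (\<bar>phi t\<bar> + 1)))" by (intro mult_left_mono) (auto simp: d3_def)
    also have "\<dots> \<le> e / 4" using assms(3) by (simp add: field_simps)
    finally show "\<bar>phi t\<bar> * d3 \<le> e / 4" .
  qed
  show ?thesis
  proof (intro exI[of _ "min (d1 / r) (min d2 d3)"] conjI allI ballI impI)
    show "0 < min (d1 / r) (min d2 d3)" using d1 d2 d3 r_pos by simp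
    fix s h assume h: "h \<in> Cset tau" "(s, Cadd u h) \<in> UNIV \<times> Oy \<and> \<bar>s - t\<bar> < min (d1 / r) (min d2 d3) \<and> cnorm tau h < min (d1 / r) (min d2 d3)"
    let ?g = "ev h"
    have ch: "cnorm tau h < d1 / r" "cnorm tau h \<le> d3" "\<bar>s - t\<bar> < d2" using h(2) by auto
    have g: "infnorm ?g < d1"
    proof -
      have "r * cnorm tau h < r * (d1 / r)" using ch(1) r_pos by (intro mult_strict_left_mono) auto
      then show ?thesis using ev_bd[OF h(1)] r_pos by simp
    qed
    have xg: "?x0 + ?g \<in> X" using h(2) by (auto simp: Oy_def ev_add)
    let ?G = "\<lambda>gs. DP j 0 (?x0 + ?g) gs - DP j 0 ?x0 gs"
    have mG: "ml_norm infnorm infnorm UNIV j ?G < e1"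
    proof -
      have "?x0 + ?g \<in> X \<and> \<bar>0 - 0\<bar> < d1 \<and> infnorm ?g < d1 \<longrightarrow> ml_norm infnorm infnorm UNIV j ?G < e1"
        using d1(2) by blast
      then show ?thesis using g xg d1(1) by simp
    qed
    have h1: "homog j (DP j 0 (?x0 + ?g)) \<and> admb j (DP j 0 (?x0 + ?g))" by (rule DP_hom_adm[OF assms(2) xg])
    have h2: "homog j M0 \<and> admb j M0" unfolding M0_def by (rule DP_hom_adm[OF assms(2) x0])
    have hG: "homog j ?G" using homog_diff h1 h2 unfolding M0_def by blast
    have aG: "admb j ?G" using admb_diff h1 h2 unfolding M0_def by blast
    have phis: "\<bar>phi s - phi t\<bar> * Bu \<le> e / 4"
    proof -
      have "\<bar>phi s - phi t\<bar> * Bu \<le> (e / (4 * Bu)) * Bu" using d2(2) ch(3) Bu by (intro mult_right_mono) auto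
      also have "\<dots> = e / 4" using Bu by simp
      finally show ?thesis .
    qed
    show "ml_norm (cnorm tau) infnorm (Cset tau) j (\<lambda>hs. Df j s (Cadd u h) hs - Df j t u hs) < e"
    proof -
      have "ml_norm (cnorm tau) infnorm (Cset tau) j (\<lambda>hs. Df j s (Cadd u h) hs - Df j t u hs) \<le> 3 * e / 4"
      proof (rule ml_norm_le)
        show "0 \<le> 3 * e / 4" using assms(3) by simp
        fix hs :: "(real \<Rightarrow> real^'m) list" assume hs: "length hs = j" "set hs \<subseteq> Cset tau" "\<forall>h\<in>set hs. cnorm tau h \<le> 1"
        let ?gs = "map ev hs"
        define R0 where "R0 = Em *v M0 ?gs - Lf j u hs"
        define R1 where "R1 = Em *v DP j 0 (?x0 + ?g) ?gs - Lf j (Cadd u h) hs"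
        have Gb: "infnorm (?G ?gs) \<le> r^j * e1"
        proof -
          have "infnorm (?G ?gs) \<le> r^j * ml_norm infnorm infnorm UNIV j ?G"
            by (rule admb_ml_bound[OF hG aG hs])
          also have "\<dots> \<le> r^j * e1" using mG r_pos by (intro mult_left_mono) auto
          finally show ?thesis .
        qed
        have M0b: "infnorm (M0 ?gs) \<le> r^j * N0"
          unfolding N0_def using h2 admb_ml_bound[OF _ _ hs] by blast
        have R10: "R1 - R0 = Em *v ?G ?gs - (Lf j (Cadd u h) hs - Lf j u hs)"
          unfolding R0_def R1_def M0_def by (simp add: algebra_simps)
        have R10b: "infnorm (R1 - R0) \<le> rho * (r^j * e1) + cnorm tau h"
        proof -
          have "infnorm (R1 - R0) \<le> rho * infnorm (?G ?gs) + infnorm (Lf j (Cadd u h) hs - Lf j u hs)"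
            unfolding R10 by (rule Em_diff_bd)
          moreover have "rho * infnorm (?G ?gs) \<le> rho * (r^j * e1)" using Gb rho_pos by (simp add: mult_left_mono)
          ultimately show ?thesis using Lf_diff[OF h(1), of j u hs] by linarith
        qed
        have R0b: "infnorm R0 \<le> rho * (r^j * N0) + (infnorm (u (-tau)) + 1)"
        proof -
          have "infnorm R0 \<le> rho * infnorm (M0 ?gs) + infnorm (Lf j u hs)"
            unfolding R0_def by (rule Em_diff_bd)
          moreover have "rho * infnorm (M0 ?gs) \<le> rho * (r^j * N0)" using M0b rho_pos by (simp add: mult_left_mono)
          ultimately show ?thesis using Lf_adm0[OF hs, of u] by linarith
        qed
        have R1b: "infnorm R1 \<le> Bu"
        proof -
          have "infnorm R1 \<le> infnorm R0 + infnorm (R1 - R0)"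
            using infnorm_triangle[of R0 "R1 - R0"] by simp
          moreover have "rho * (r^j * e1) \<le> rho * r^j" using e1 rho_pos r_pos by simp
          moreover have "cnorm tau h \<le> 1" using ch(2) d3(2) by linarith
          ultimately show ?thesis using R0b R10b unfolding Bu_def by (simp add: algebra_simps)
        qed
        have eq: "Df j s (Cadd u h) hs - Df j t u hs = (phi s - phi t) *\<^sub>R R1 + phi t *\<^sub>R (R1 - R0)"
          unfolding Df_def R0_def R1_def M0_def by (simp add: ev_add algebra_simps)
        have "infnorm (Df j s (Cadd u h) hs - Df j t u hs) \<le> \<bar>phi s - phi t\<bar> * infnorm R1 + \<bar>phi t\<bar> * infnorm (R1 - R0)"
          unfolding eq using infnorm_triangle by (metis infnorm_mul)
        also have "\<dots> \<le> \<bar>phi s - phi t\<bar> * Bu + \<bar>phi t\<bar> * (rho * (r^j * e1) + cnorm tau h)"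
          using R1b R10b by (intro add_mono mult_left_mono) auto
        also have "\<dots> = \<bar>phi s - phi t\<bar> * Bu + A * e1 + \<bar>phi t\<bar> * cnorm tau h"
          unfolding A_def by (simp add: algebra_simps)
        also have "\<dots> \<le> e / 4 + e / 4 + e / 4"
        proof -
          have "\<bar>phi t\<bar> * cnorm tau h \<le> \<bar>phi t\<bar> * d3" using ch(2) by (intro mult_left_mono) auto
          then show ?thesis using phis e1(3) d3(3) by linarith
        qed
        finally show "infnorm (Df j s (Cadd u h) hs - Df j t u hs) \<le> 3 * e / 4" by simp
      qed
      then show ?thesis using assms(3) by linarith
    qed
  qed
qed

lemma Df_bdd: assumes "j \<in> {1..k}"
  shows "bdd_above {ml_norm (cnorm tau) infnorm (Cset tau) j (Df j t u) | t u. (t,u) \<in> UNIV \<times> Oy}"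
proof -
  obtain BP where BP: "\<forall>z\<in>{ml_norm infnorm infnorm UNIV j (DP j t x) | t x. (t,x) \<in> UNIV \<times> X}. z \<le> BP"
    using DP_bdd assms unfolding bdd_above_def by blast
  have jk: "j \<le> k" "j \<ge> 1" using assms by auto
  have Pm0: "0 \<le> Phimax" using phi_bd[of 0] by linarith
  define C where "C = Phimax * (rho * (r^j * max BP 0) + 1)"
  have "ml_norm (cnorm tau) infnorm (Cset tau) j (Df j t u) \<le> C" if u: "u \<in> Oy" for t u
  proof (rule ml_norm_le)
    show "0 \<le> C" unfolding C_def using Pm0 rho_pos r_pos by simp
    fix hs :: "(real \<Rightarrow> real^'m) list" assume hs: "length hs = j" "set hs \<subseteq> Cset tau" "\<forall>h\<in>set hs. cnorm tau h \<le> 1"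
    have x0: "ev u \<in> X" using u by (auto simp: Oy_def)
    have ha: "homog j (DP j 0 (ev u)) \<and> admb j (DP j 0 (ev u))" by (rule DP_hom_adm[OF jk(1) x0])
    have "infnorm (DP j 0 (ev u) (map ev hs)) \<le> r^j * ml_norm infnorm infnorm UNIV j (DP j 0 (ev u))"
      using ha admb_ml_bound[OF _ _ hs] by blast
    also have "\<dots> \<le> r^j * max BP 0"
    proof -
      have "ml_norm infnorm infnorm UNIV j (DP j 0 (ev u)) \<le> BP" using BP x0 by blast
      then show ?thesis using r_pos by (intro mult_left_mono) auto
    qed
    finally have a: "infnorm (DP j 0 (ev u) (map ev hs)) \<le> r^j * max BP 0" .
    have "infnorm (Df j t u hs) = \<bar>phi t\<bar> * infnorm (Em *v DP j 0 (ev u) (map ev hs) - Lf j u hs)"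
      unfolding Df_def by (simp add: infnorm_mul)
    also have "\<dots> \<le> Phimax * (rho * (r^j * max BP 0) + 1)"
    proof (rule mult_mono)
      have "rho * infnorm (DP j 0 (ev u) (map ev hs)) \<le> rho * (r^j * max BP 0)"
        using a rho_pos by (simp add: mult_left_mono)
      then show "infnorm (Em *v DP j 0 (ev u) (map ev hs) - Lf j u hs) \<le> rho * (r^j * max BP 0) + 1"
        using Em_diff_bd[of "DP j 0 (ev u) (map ev hs)" "Lf j u hs"] Lf_adm[OF hs jk(2), of u] by linarith
    qed (use phi_bd Pm0 infnorm_pos_le in auto)
    finally show "infnorm (Df j t u hs) \<le> C" unfolding C_def .
  qed
  then show ?thesis by (intro bdd_aboveI[of _ C]) auto
qed

lemma F_C0kb: "C0kb Cadd Cscale (cnorm tau) infnorm (Cset tau) (UNIV \<times> Oy) k Ff"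
  unfolding C0kb_def
proof (intro exI[of _ Df] conjI)
  show "deriv_family Cadd Cscale (cnorm tau) infnorm (Cset tau) (UNIV \<times> Oy) Ff k Df"
    unfolding deriv_family_def
  proof (intro conjI)
    show "\<forall>(t, u)\<in>UNIV \<times> Oy. Df 0 t u [] = Ff t u" by (auto simp: Ff_def)
    show "\<forall>j\<le>k. \<forall>(t, u)\<in>UNIV \<times> Oy. ml_bounded Cadd Cscale (cnorm tau) infnorm (Cset tau) j (Df j t u)"
      using Df_mlb by auto
    show "\<forall>j<k. \<forall>(t, u)\<in>UNIV \<times> Oy. \<forall>e>0. \<exists>d>0. \<forall>h\<in>Cset tau. (t, Cadd u h) \<in> UNIV \<times> Oy \<and> cnorm tau h < d \<longrightarrow>
      ml_norm (cnorm tau) infnorm (Cset tau) j (\<lambda>hs. Df j t (Cadd u h) hs - Df j t u hs - Df (Suc j) t u (h # hs)) \<le> e * cnorm tau h"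
    proof (intro allI impI ballI)
      fix j :: nat and p :: "real \<times> (real \<Rightarrow> real^'m)" assume j: "j < k" and p: "p \<in> UNIV \<times> Oy"
      then obtain t u where tu: "p = (t, u)" "u \<in> Oy" by auto
      have "\<forall>e>0. \<exists>d>0. \<forall>h\<in>Cset tau. (t, Cadd u h) \<in> UNIV \<times> Oy \<and> cnorm tau h < d \<longrightarrow>
      ml_norm (cnorm tau) infnorm (Cset tau) j (\<lambda>hs. Df j t (Cadd u h) hs - Df j t u hs - Df (Suc j) t u (h # hs)) \<le> e * cnorm tau h"
        using Df_deriv[OF tu(2) j] by blast
      then show "case p of (t, u) \<Rightarrow> \<forall>e>0. \<exists>d>0. \<forall>h\<in>Cset tau. (t, Cadd u h) \<in> UNIV \<times> Oy \<and> cnorm tau h < d \<longrightarrow>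
      ml_norm (cnorm tau) infnorm (Cset tau) j (\<lambda>hs. Df j t (Cadd u h) hs - Df j t u hs - Df (Suc j) t u (h # hs)) \<le> e * cnorm tau h"
        unfolding tu(1) case_prod_conv .
    qed
    show "\<forall>j\<le>k. \<forall>(t, u)\<in>UNIV \<times> Oy. \<forall>e>0. \<exists>d>0. \<forall>s. \<forall>h\<in>Cset tau. (s, Cadd u h) \<in> UNIV \<times> Oy \<and> \<bar>s - t\<bar> < d \<and> cnorm tau h < d \<longrightarrow>
      ml_norm (cnorm tau) infnorm (Cset tau) j (\<lambda>hs. Df j s (Cadd u h) hs - Df j t u hs) < e"
    proof (intro allI impI ballI)
      fix j :: nat and p :: "real \<times> (real \<Rightarrow> real^'m)" assume j: "j \<le> k" and p: "p \<in> UNIV \<times> Oy"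
      then obtain t u where tu: "p = (t, u)" "u \<in> Oy" by auto
      have "\<forall>e>0. \<exists>d>0. \<forall>s. \<forall>h\<in>Cset tau. (s, Cadd u h) \<in> UNIV \<times> Oy \<and> \<bar>s - t\<bar> < d \<and> cnorm tau h < d \<longrightarrow>
      ml_norm (cnorm tau) infnorm (Cset tau) j (\<lambda>hs. Df j s (Cadd u h) hs - Df j t u hs) < e"
        using Df_cont[OF tu(2) j] by blast
      then show "case p of (t, u) \<Rightarrow> \<forall>e>0. \<exists>d>0. \<forall>s. \<forall>h\<in>Cset tau. (s, Cadd u h) \<in> UNIV \<times> Oy \<and> \<bar>s - t\<bar> < d \<and> cnorm tau h < d \<longrightarrow>
      ml_norm (cnorm tau) infnorm (Cset tau) j (\<lambda>hs. Df j s (Cadd u h) hs - Df j t u hs) < e"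
        unfolding tu(1) case_prod_conv .
    qed
  qed
  show "\<forall>j\<in>{1..k}. bdd_above {ml_norm (cnorm tau) infnorm (Cset tau) j (Df j t u) | t u. (t, u) \<in> UNIV \<times> Oy}"
    by (intro ballI Df_bdd)
qed

end


definition bump :: "real \<Rightarrow> real \<Rightarrow> real \<Rightarrow> real" where
  "bump a tau t = (1 - cos (2 * pi * (max a (min (a + tau) t) - a) / tau)) / tau"

definition Bint :: "real \<Rightarrow> real \<Rightarrow> real \<Rightarrow> real \<Rightarrow> real" where
  "Bint L a tau t = integral {L..t} (bump a tau)"

lemma bump_cont: "continuous_on UNIV (bump a tau)"
  unfolding bump_def divide_inverse by (intro continuous_intros)

lemma bump_bd: "tau > 0 \<Longrightarrow> \<bar>bump a tau t\<bar> \<le> 2 / tau"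
  unfolding bump_def using cos_le_one[of "2 * pi * (max a (min (a + tau) t) - a) / tau"]
    cos_ge_minus_one[of "2 * pi * (max a (min (a + tau) t) - a) / tau"]
  by (auto simp: divide_right_mono abs_le_iff)

lemma bump_zero: assumes "tau > 0" "t \<le> a \<or> t \<ge> a + tau" shows "bump a tau t = 0"
proof -
  have "max a (min (a + tau) t) - a = 0 \<or> max a (min (a + tau) t) - a = tau" using assms by auto
  then show ?thesis unfolding bump_def using assms(1) by auto
qed

lemma bump_inner: "tau > 0 \<Longrightarrow> a \<le> t \<Longrightarrow> t \<le> a + tau \<Longrightarrow> bump a tau t = (1 - cos (2 * pi * (t - a) / tau)) / tau"
  unfolding bump_def by simp

lemma Bint_deriv: assumes "L < t"
  shows "(Bint L a tau has_vector_derivative bump a tau t) (at t)"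
proof -
  have "(Bint L a tau has_vector_derivative bump a tau t) (at t within {L..t+1})"
    unfolding Bint_def by (rule integral_has_vector_derivative)
      (use assms continuous_on_subset[OF bump_cont, of "{L..t+1}" a tau] in auto)
  then have "(Bint L a tau has_vector_derivative bump a tau t) (at t within {L<..<t+1})"
    by (rule has_vector_derivative_within_subset) auto
  then show ?thesis using at_within_open[of t "{L<..<t+1}"] assms by auto
qed

lemma Bint_cont: "L < t \<Longrightarrow> isCont (Bint L a tau) t"
  using Bint_deriv has_vector_derivative_continuous by blast

lemma Bint_zero: assumes "tau > 0" "t \<le> a" shows "Bint L a tau t = 0"
proof -
  have "integral {L..t} (bump a tau) = integral {L..t} (\<lambda>_. 0::real)"
    by (rule integral_cong) (use assms bump_zero in auto)
  then show ?thesis unfolding Bint_def by simp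
qed

lemma bump_int1: assumes "tau > 0" shows "integral {a..a+tau} (bump a tau) = 1"
proof -
  define A where "A = (\<lambda>t. (t - a) / tau - sin (2 * pi * (t - a) / tau) / (2 * pi))"
  have d: "(A has_vector_derivative bump a tau t) (at t within {a..a+tau})" if "t \<in> {a..a+tau}" for t
  proof -
    have "(A has_real_derivative (1 / tau - cos (2 * pi * (t - a) / tau) * (2 * pi / tau) / (2 * pi))) (at t)"
      unfolding A_def using assms by (auto intro!: derivative_eq_intros simp: field_simps)
    moreover have "1 / tau - cos (2 * pi * (t - a) / tau) * (2 * pi / tau) / (2 * pi) = bump a tau t"
      using that assms by (simp add: bump_inner field_simps)
    ultimately show ?thesis
      by (simp add: has_real_derivative_iff_has_vector_derivative has_vector_derivative_at_within)
  qed
  have "(bump a tau has_integral (A (a + tau) - A a)) {a..a+tau}"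
    by (rule fundamental_theorem_of_calculus) (use assms d in auto)
  moreover have "A (a + tau) - A a = 1" unfolding A_def using assms by simp
  ultimately show ?thesis by (simp add: integral_unique)
qed

lemma Bint_one: assumes "tau > 0" "L \<le> a" shows "Bint L a tau (a + tau) = 1"
proof -
  have int: "bump a tau integrable_on {L..a+tau}"
    by (rule integrable_continuous_real) (use bump_cont continuous_on_subset in blast)
  have "integral {L..a} (bump a tau) + integral {a..a+tau} (bump a tau) = integral {L..a+tau} (bump a tau)"
    by (rule Henstock_Kurzweil_Integration.integral_combine) (use assms int in auto)
  moreover have "integral {L..a} (bump a tau) = 0" using Bint_zero[OF assms(1), where t=a and a=a and L=L] by (simp add: Bint_def)
  ultimately show ?thesis using bump_int1[OF assms(1)] by (simp add: Bint_def)
qed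


definition Wm :: "('n \<Rightarrow> 'm) \<Rightarrow> real \<Rightarrow> real^'n^'m" where
  "Wm f c = (\<chi> i j. if i = f j then c else 0)"
definition Pmat :: "('n \<Rightarrow> 'm) \<Rightarrow> real \<Rightarrow> real^'m^'n" where
  "Pmat f c = (\<chi> j i. if i = f j then c else 0)"

lemma infnorm_le_cart: "(\<And>i. \<bar>x $ i\<bar> \<le> C) \<Longrightarrow> infnorm (x::real^'n) \<le> C"
  unfolding infnorm_cart by (rule cSup_least) auto

lemma Wm_apply: assumes "inj f"
  shows "(Wm f c *v x) $ i = (if i \<in> range f then c * x $ inv f i else 0)"
proof (cases "i \<in> range f")
  case True
  then obtain j0 where j0: "i = f j0" by auto
  have "(Wm f c *v x) $ i = (\<Sum>j\<in>UNIV. (if j = j0 then c * x $ j else 0))"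
    unfolding Wm_def matrix_vector_mult_def vec_lambda_beta using assms j0
    by (intro sum.cong) (auto simp: inj_eq)
  also have "\<dots> = c * x $ j0" by simp
  finally show ?thesis using True j0 assms by simp
next
  case False
  then show ?thesis unfolding Wm_def matrix_vector_mult_def vec_lambda_beta
    by (auto intro!: sum.neutral)
qed

lemma Pmat_apply: "(Pmat f c *v z) $ j = c * z $ f j"
proof -
  have "(Pmat f c *v z) $ j = (\<Sum>i\<in>UNIV. (if i = f j then c * z $ i else 0))"
    unfolding Pmat_def matrix_vector_mult_def vec_lambda_beta by (intro sum.cong) auto
  also have "\<dots> = c * z $ f j" by simp
  finally show ?thesis .
qed

lemma Pmat_Wm: "inj f \<Longrightarrow> Pmat f d *v (Wm f c *v x) = (d * c) *\<^sub>R x"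
  by (simp add: vec_eq_iff Pmat_apply Wm_apply)

lemma infnorm_Wm: assumes "inj f" "c \<ge> 0"
  shows "infnorm (Wm f c *v x) = c * infnorm x"
proof (rule antisym)
  show "infnorm (Wm f c *v x) \<le> c * infnorm x"
  proof (rule infnorm_le_cart)
    fix i
    have 0: "0 \<le> c * infnorm x" using assms(2) infnorm_pos_le[of x] by simp
    show "\<bar>(Wm f c *v x) $ i\<bar> \<le> c * infnorm x"
      using assms 0 component_le_infnorm_cart[of x] by (auto simp: Wm_apply abs_mult intro: mult_left_mono)
  qed
  show "c * infnorm x \<le> infnorm (Wm f c *v x)"
  proof (cases "c = 0")
    case False
    then have cp: "c > 0" using assms by simp
    have "infnorm x \<le> infnorm (Wm f c *v x) / c"
    proof (rule infnorm_le_cart)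
      fix j
      have "\<bar>(Wm f c *v x) $ f j\<bar> = c * \<bar>x $ j\<bar>" using assms by (simp add: Wm_apply abs_mult)
      then show "\<bar>x $ j\<bar> \<le> infnorm (Wm f c *v x) / c"
        using component_le_infnorm_cart[of "Wm f c *v x" "f j"] cp by (simp add: field_simps)
    qed
    then show ?thesis using cp by (simp add: field_simps)
  qed (simp add: infnorm_pos_le)
qed

lemma infnorm_Pmat: assumes "c \<ge> 0" shows "infnorm (Pmat f c *v z) \<le> c * infnorm z"
  by (rule infnorm_le_cart) (use assms component_le_infnorm_cart in \<open>auto simp: Pmat_apply abs_mult intro: mult_left_mono\<close>)

lemma infnorm_const_vec: "c \<ge> 0 \<Longrightarrow> infnorm ((\<chi> i. c) :: real^'n) = c"
  unfolding infnorm_cart by simp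

lemma mat_infnorm_Wm: assumes "inj f" "c \<ge> 0" shows "mat_infnorm (Wm f c) = c"
  unfolding mat_infnorm_def
proof (rule cSup_eq_maximum)
  show "c \<in> {infnorm (Wm f c *v x) |x. infnorm x = 1}"
    using infnorm_Wm[OF assms, of "\<chi> i. 1"] infnorm_const_vec[of 1] by force
qed (use infnorm_Wm[OF assms] in auto)

lemma mat_infnorm_Pmat: assumes "c \<ge> 0" shows "mat_infnorm (Pmat f c) = c"
  unfolding mat_infnorm_def
proof (rule cSup_eq_maximum)
  have "Pmat f c *v (\<chi> i. 1) = (\<chi> i. c)" by (simp add: vec_eq_iff Pmat_apply)
  then show "c \<in> {infnorm (Pmat f c *v x) |x. infnorm x = 1}"
    using assms by (intro CollectI exI[of _ "\<chi> i. 1"]) (simp add: infnorm_const_vec)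
next
  fix y assume "y \<in> {infnorm (Pmat f c *v x) |x. infnorm x = 1}"
  then obtain x where "y = infnorm (Pmat f c *v x)" "infnorm x = 1" by blast
  then show "y \<le> c" using infnorm_Pmat[OF assms, of f x] by simp
qed


lemma Psi_family:
  fixes X :: "(real^'n) set" and Psi :: "real^'n \<Rightarrow> real^'q"
  assumes "if k = 0 then continuous_on X Psi else Ckb k X Psi"
  shows "\<exists>DP. deriv_family (+) (*\<^sub>R) infnorm infnorm UNIV (UNIV \<times> X) (\<lambda>_ x. Psi x) k DP \<and>
     (\<forall>j\<in>{1..k}. bdd_above {ml_norm infnorm infnorm UNIV j (DP j t x) | t x. (t,x) \<in> UNIV \<times> X})"
proof (cases "k = 0")
  case False
  then show ?thesis using assms unfolding Ckb_def C0kb_def by auto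
next
  case True
  then have cont: "continuous_on X Psi" using assms by simp
  let ?D = "\<lambda>(j::nat) (t::real) x (hs::(real^'n) list). Psi x"
  have "deriv_family (+) (*\<^sub>R) infnorm infnorm UNIV (UNIV \<times> X) (\<lambda>_ x. Psi x) 0 ?D"
    unfolding deriv_family_def
  proof (intro conjI)
    show "\<forall>(t, u)\<in>UNIV \<times> X. Psi u = Psi u" by auto
    show "\<forall>j\<le>0. \<forall>(t, u)\<in>UNIV \<times> X. ml_bounded (+) (*\<^sub>R) infnorm infnorm UNIV j (?D j t u)"
      unfolding ml_bounded_def by (auto intro!: exI[where x="infnorm (Psi _)"])
    show "\<forall>j<0. P j" for P :: "nat \<Rightarrow> bool" by simp
    show "\<forall>j\<le>0. \<forall>(t, u)\<in>UNIV \<times> X. \<forall>e>0. \<exists>d>0. \<forall>s. \<forall>h\<in>UNIV. (s, u + h) \<in> UNIV \<times> X \<and> \<bar>s - t\<bar> < d \<and> infnorm h < d \<longrightarrow>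
       ml_norm infnorm infnorm UNIV j (\<lambda>hs. ?D j s (u + h) hs - ?D j t u hs) < e"
    proof (intro allI impI ballI)
      fix j :: nat and p :: "real \<times> (real^'n)" and e :: real
      assume j: "j \<le> 0" and p: "p \<in> UNIV \<times> X"
      obtain t x where tx: "p = (t, x)" "x \<in> X" using p by auto
      have "\<forall>e>0. \<exists>d>0. \<forall>s. \<forall>h\<in>UNIV. (s, x + h) \<in> UNIV \<times> X \<and> \<bar>s - t\<bar> < d \<and> infnorm h < d \<longrightarrow>
       ml_norm infnorm infnorm UNIV j (\<lambda>hs. ?D j s (x + h) hs - ?D j t x hs) < e"
      proof (intro allI impI)
        fix e :: real assume e: "e > 0"
        obtain d where d: "d > 0" "\<forall>x'\<in>X. dist x' x < d \<longrightarrow> dist (Psi x') (Psi x) < e / 2"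
          using cont tx(2) e unfolding continuous_on_iff by (meson half_gt_zero)
        define d' where "d' = d / (sqrt (real CARD('n)) + 1)"
        have d'p: "d' > 0" using d by (simp add: d'_def add_nonneg_pos)
        have sq: "(sqrt (real CARD('n)) + 1) * d' = d"
        proof -
          have "sqrt (real CARD('n)) + 1 > 0" by (simp add: add_nonneg_pos)
          then show ?thesis unfolding d'_def by simp
        qed
        show "\<exists>d>0. \<forall>s. \<forall>h\<in>UNIV. (s, x + h) \<in> UNIV \<times> X \<and> \<bar>s - t\<bar> < d \<and> infnorm h < d \<longrightarrow>
          ml_norm infnorm infnorm UNIV j (\<lambda>hs. ?D j s (x + h) hs - ?D j t x hs) < e"
        proof (intro exI[of _ d'] conjI d'p allI ballI impI)
          fix s h assume sh: "(s, x + h) \<in> UNIV \<times> X \<and> \<bar>s - t\<bar> < d' \<and> infnorm h < d'"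
          have "norm h < d"
          proof -
            have a1: "sqrt (real CARD('n)) * infnorm h \<le> sqrt (real CARD('n)) * d'"
              using sh by (intro mult_left_mono) auto
            have a2: "sqrt (real CARD('n)) * d' < (sqrt (real CARD('n)) + 1) * d'" using d'p by simp
            have a3: "norm h \<le> sqrt (real CARD('n)) * infnorm h" using norm_le_infnorm[of h] by simp
            show ?thesis using a1 a2 a3 sq by linarith
          qed
          then have "dist (Psi (x + h)) (Psi x) < e / 2" using d(2) sh by (auto simp: dist_norm)
          then have i: "infnorm (Psi (x + h) - Psi x) \<le> e / 2"
            using infnorm_le_norm[of "Psi (x + h) - Psi x"] by (simp add: dist_norm)
          have "ml_norm infnorm infnorm UNIV j (\<lambda>hs. ?D j s (x + h) hs - ?D j t x hs) \<le> e / 2"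
            by (rule ml_norm_le) (use e i in auto)
          then show "ml_norm infnorm infnorm UNIV j (\<lambda>hs. ?D j s (x + h) hs - ?D j t x hs) < e" using e by linarith
        qed
      qed
      then show "case p of (t, u) \<Rightarrow> \<forall>e>0. \<exists>d>0. \<forall>s. \<forall>h\<in>UNIV. (s, u + h) \<in> UNIV \<times> X \<and> \<bar>s - t\<bar> < d \<and> infnorm h < d \<longrightarrow>
       ml_norm infnorm infnorm UNIV j (\<lambda>hs. ?D j s (u + h) hs - ?D j t u hs) < e"
        unfolding tx(1) case_prod_conv .
    qed
  qed
  then show ?thesis using True by (intro exI[of _ ?D]) auto
qed


lemma ereal0_plus: "ereal 0 + c = (c::ereal)"
  by (simp add: zero_ereal_def[symmetric])

locale sol = constr tau "1/w" "1/w'" "2/tau" X k Psi DP "bump (T - tau) tau" "Pmat \<iota> (1/w)" "Wm \<kappa> (1/w')"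
  for tau w w' X k Psi DP T and \<iota> :: "'n::finite \<Rightarrow> 'm::finite" and \<kappa> :: "'q::finite \<Rightarrow> 'm" +
  assumes T_ge: "tau \<le> T" and w_pos: "w > 0" and w'_pos: "w' > 0" and inj_i: "inj \<iota>" and inj_k: "inj \<kappa>"
begin

definition Phi :: "real \<Rightarrow> real" where "Phi = Bint (-tau - 1) (T - tau) tau"
definition G :: "real^'n \<Rightarrow> real^'m" where "G x = Wm \<kappa> (1/w') *v Psi x - Wm \<iota> w *v x"
definition ysol :: "real^'n \<Rightarrow> real \<Rightarrow> real^'m" where "ysol x t = Wm \<iota> w *v x + Phi t *\<^sub>R G x"

lemma PW: "Pmat \<iota> (1/w) *v (Wm \<iota> w *v x) = x"
  using Pmat_Wm[OF inj_i] w_pos by simp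

lemma WE: "Pmat \<kappa> w' *v (Wm \<kappa> (1/w') *v v) = v"
  using Pmat_Wm[OF inj_k] w'_pos by simp

lemma seg_m: "seg tau y t (-tau) = y (t - tau)"
  using tau_pos by (simp add: seg_def)

lemma Ff_phi0: "bump (T - tau) tau t = 0 \<Longrightarrow> Ff t u = 0"
  by (simp add: Ff_def Df_def)

lemma Ff_x: assumes "x \<in> X" "u (-tau) = Wm \<iota> w *v x"
  shows "Ff t u = bump (T - tau) tau t *\<^sub>R G x"
proof -
  have "ev u = x" unfolding ev_def using assms(2) PW by simp
  then show ?thesis using DP0[OF assms(1)] assms(2) by (simp add: Ff_def Df_def Lf_def G_def)
qed

lemma phi_nz: "bump (T - tau) tau t \<noteq> 0 \<Longrightarrow> T - tau < t \<and> t < T"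
  using bump_zero[OF tau_pos, of t "T - tau"] by force

lemma Phi_deriv: "t > -tau - 1 \<Longrightarrow> (Phi has_vector_derivative bump (T - tau) tau t) (at t)"
  unfolding Phi_def by (rule Bint_deriv)

lemma Phi_zero: "t \<le> T - tau \<Longrightarrow> Phi t = 0"
  unfolding Phi_def using Bint_zero[OF tau_pos] by blast

lemma Phi_T: "Phi T = 1"
  unfolding Phi_def using Bint_one[OF tau_pos, of "-tau - 1" "T - tau"] T_ge tau_pos by simp

lemma Phi_cont: "t > -tau - 1 \<Longrightarrow> isCont Phi t"
  unfolding Phi_def by (rule Bint_cont)

lemma ysol_deriv: assumes "t > -tau - 1"
  shows "(ysol x has_vector_derivative bump (T - tau) tau t *\<^sub>R G x) (at t)"
proof -
  have D: "(Phi has_field_derivative bump (T - tau) tau t) (at t)"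
    using Phi_deriv[OF assms] by (simp add: has_real_derivative_iff_has_vector_derivative)
  have "((\<lambda>t. Phi t *\<^sub>R G x) has_vector_derivative (Phi t *\<^sub>R 0 + bump (T - tau) tau t *\<^sub>R G x)) (at t)"
    by (rule has_vector_derivative_scaleR[OF D has_vector_derivative_const])
  then have "((\<lambda>t. Wm \<iota> w *v x + Phi t *\<^sub>R G x) has_vector_derivative (0 + (Phi t *\<^sub>R 0 + bump (T - tau) tau t *\<^sub>R G x))) (at t)"
    by (rule has_vector_derivative_add[OF has_vector_derivative_const])
  then show ?thesis unfolding ysol_def[abs_def] by simp
qed

lemma ysol_cont: "t > -tau - 1 \<Longrightarrow> isCont (ysol x) t"
  using ysol_deriv has_vector_derivative_continuous by blast

lemma const_on:
  fixes f :: "real \<Rightarrow> real^'m"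
  assumes "\<And>r. r \<in> {0..s} \<Longrightarrow> (f has_vector_derivative 0) (at r within {0..s})" "0 \<le> s"
  shows "f s = f 0"
proof -
  obtain c where "\<And>r. r \<in> {0..s} \<Longrightarrow> f r = c"
    using has_vector_derivative_zero_constant[of "{0..s}" f] assms(1) by auto
  then show ?thesis using assms(2) by auto
qed

lemma sol_unique:
  assumes x: "x \<in> X" and sol: "dde_solution tau Ff UNIV Oy 0 (cconst tau (Wm \<iota> w *v x)) y c"
    and t: "-tau \<le> t" "ereal t < c"
  shows "y t = ysol x t"
proof -
  have seg0: "seg tau y 0 = cconst tau (Wm \<iota> w *v x)" using sol by (simp add: dde_solution_def)
  have D: "\<And>s. 0 \<le> s \<Longrightarrow> ereal s < c \<Longrightarrow> (y has_vector_derivative Ff s (seg tau y s)) (at s within {0..})"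
    using sol by (simp add: dde_solution_def ereal0_plus)
  have init: "y s = Wm \<iota> w *v x" if "-tau \<le> s" "s \<le> 0" for s
  proof -
    have "seg tau y 0 s = cconst tau (Wm \<iota> w *v x) s" using seg0 by simp
    then show ?thesis using that by (simp add: seg_def cconst_def)
  qed
  have step1: "y s = Wm \<iota> w *v x" if "0 \<le> s" "s \<le> T - tau" "ereal s < c" for s
  proof -
    have "y s = y 0"
    proof (rule const_on[OF _ that(1)])
      fix r assume r: "r \<in> {0..s}"
      then have "ereal r < c" using that(3) by (meson atLeastAtMost_iff ereal_less_eq(3) order_le_less_trans)
      then have "(y has_vector_derivative Ff r (seg tau y r)) (at r within {0..})" using D r by auto
      moreover have "Ff r (seg tau y r) = 0" using r that(2) by (intro Ff_phi0 bump_zero[OF tau_pos]) auto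
      ultimately show "(y has_vector_derivative 0) (at r within {0..s})"
        by (auto intro: has_vector_derivative_within_subset)
    qed
    then show ?thesis using init[of 0] tau_pos by simp
  qed
  have step2: "Ff s (seg tau y s) = bump (T - tau) tau s *\<^sub>R G x" if "0 \<le> s" "ereal s < c" for s
  proof (cases "bump (T - tau) tau s = 0")
    case True then show ?thesis using Ff_phi0 by simp
  next
    case False
    then have st: "T - tau < s" "s < T" using phi_nz by auto
    have "y (s - tau) = Wm \<iota> w *v x"
    proof (cases "s - tau \<le> 0")
      case True then show ?thesis using init st T_ge by simp
    next
      case False
      have "ereal (s - tau) < c" using that(2) tau_pos by (meson ereal_less_eq(3) diff_le_eq le_add_same_cancel1 less_imp_le order_le_less_trans)
      then show ?thesis using step1 False st by simp
    qed
    then have "seg tau y s (-tau) = Wm \<iota> w *v x" using tau_pos by (simp add: seg_def)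
    then show ?thesis by (rule Ff_x[OF x])
  qed
  have main: "y s = ysol x s" if "0 \<le> s" "ereal s < c" for s
  proof -
    let ?z = "\<lambda>r. y r - Phi r *\<^sub>R G x"
    have "?z s = ?z 0"
    proof (rule const_on[OF _ that(1)])
      fix r assume r: "r \<in> {0..s}"
      then have rc: "ereal r < c" using that(2) by (meson atLeastAtMost_iff ereal_less_eq(3) order_le_less_trans)
      have "(y has_vector_derivative bump (T - tau) tau r *\<^sub>R G x) (at r within {0..})"
        using D[of r] rc r step2[of r] by auto
      then have dy: "(y has_vector_derivative bump (T - tau) tau r *\<^sub>R G x) (at r within {0..s})"
        by (rule has_vector_derivative_within_subset) auto
      have "(Phi has_field_derivative bump (T - tau) tau r) (at r within {0..s})"
        using Phi_deriv[of r] r tau_pos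
        by (auto simp: has_real_derivative_iff_has_vector_derivative intro: has_vector_derivative_at_within)
      then have dP: "((\<lambda>r. Phi r *\<^sub>R G x) has_vector_derivative (Phi r *\<^sub>R 0 + bump (T - tau) tau r *\<^sub>R G x)) (at r within {0..s})"
        by (rule has_vector_derivative_scaleR[OF _ has_vector_derivative_const])
      show "(?z has_vector_derivative 0) (at r within {0..s})"
        using has_vector_derivative_diff[OF dy dP] by simp
    qed
    moreover have "Phi 0 = 0" using T_ge by (intro Phi_zero) simp
    ultimately have "y s - Phi s *\<^sub>R G x = Wm \<iota> w *v x" using init[of 0] tau_pos by simp
    then show ?thesis unfolding ysol_def by (metis diff_add_cancel add.commute)
  qed
  show ?thesis
  proof (cases "t \<le> 0")
    case True
    then have "Phi t = 0" using T_ge by (intro Phi_zero) simp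
    then show ?thesis using init[OF t(1) True] by (simp add: ysol_def)
  qed (use main t in auto)
qed

end


context sol begin

lemma Pm_ysol: "Pmat \<iota> (1/w) *v ysol x s = x + Phi s *\<^sub>R (Pmat \<iota> (1/w) *v G x)"
  unfolding ysol_def by (simp add: matrix_vector_right_distrib matrix_vector_mult_scaleR PW)

lemma ysol_cont_on: "continuous_on {-tau - 1<..} (ysol x)"
  by (rule continuous_at_imp_continuous_on) (auto intro: ysol_cont)

lemma sol_exists: assumes x: "x \<in> X"
  shows "\<exists>c. dde_solution tau Ff UNIV Oy 0 (cconst tau (Wm \<iota> w *v x)) (ysol x) c \<and> ereal T < c"
proof -
  obtain \<rho>0 where r0: "\<rho>0 > 0" "ball x \<rho>0 \<subseteq> X" using X_open x open_contains_ball by blast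
  define v0 where "v0 = Pmat \<iota> (1/w) *v G x"
  define \<epsilon> where "\<epsilon> = \<rho>0 / (norm v0 + 1)"
  have ep: "\<epsilon> > 0" using r0 by (simp add: \<epsilon>_def add_nonneg_pos)
  have epn: "\<epsilon> * norm v0 < \<rho>0"
  proof -
    have "\<epsilon> * norm v0 < \<epsilon> * (norm v0 + 1)" using ep by simp
    also have "\<dots> = \<rho>0"
    proof -
      have "norm v0 + 1 > 0" by (simp add: add_nonneg_pos)
      then show ?thesis unfolding \<epsilon>_def by simp
    qed
    finally show ?thesis .
  qed
  have Pc: "continuous_on {-tau - 1<..} Phi"
    by (rule continuous_at_imp_continuous_on) (auto intro: Phi_cont)
  have aL: "T - tau \<in> {-tau - 1<..}" using T_ge tau_pos by simp
  obtain \<delta> where dl: "\<delta> > 0" "\<forall>s\<in>{-tau - 1<..}. dist s (T - tau) < \<delta> \<longrightarrow> dist (Phi s) (Phi (T - tau)) < \<epsilon>"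
    using Pc aL ep unfolding continuous_on_iff by blast
  have Pa: "Phi (T - tau) = 0" by (rule Phi_zero) simp
  have Tp: "T > 0" using T_ge tau_pos by simp
  have seg_ev: "ev (seg tau (ysol x) t) = x + Phi (t - tau) *\<^sub>R v0" for t
    unfolding ev_def v0_def using tau_pos by (simp add: seg_def Pm_ysol)
  have Cs: "seg tau (ysol x) t \<in> Cset tau" if "0 \<le> t" for t
  proof -
    have "continuous_on {-tau..0} (\<lambda>s. ysol x (t + s))"
      by (rule continuous_on_compose2[OF ysol_cont_on, of _ "\<lambda>s. t + s"]) (use that in \<open>auto intro!: continuous_intros\<close>)
    then have "continuous_on {-tau..0} (seg tau (ysol x) t)"
      by (rule continuous_on_eq) (auto simp: seg_def)
    then show ?thesis by (auto simp: Cset_def seg_def)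
  qed
  have inX: "ev (seg tau (ysol x) t) \<in> X" if "0 \<le> t" "t < T + \<delta>" for t
  proof (cases "t - tau \<le> T - tau")
    case True
    then show ?thesis using seg_ev Phi_zero x by simp
  next
    case False
    have "dist (Phi (t - tau)) (Phi (T - tau)) < \<epsilon>"
      using dl(2) False that tau_pos by (auto simp: dist_real_def)
    then have "\<bar>Phi (t - tau)\<bar> < \<epsilon>" using Pa by (simp add: dist_real_def)
    then have "\<bar>Phi (t - tau)\<bar> * norm v0 \<le> \<epsilon> * norm v0" by (intro mult_right_mono) auto
    then have "dist x (x + Phi (t - tau) *\<^sub>R v0) < \<rho>0" using epn by (simp add: dist_norm)
    then show ?thesis using r0(2) seg_ev by auto
  qed
  have Fseg: "Ff t (seg tau (ysol x) t) = bump (T - tau) tau t *\<^sub>R G x" for t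
  proof (cases "bump (T - tau) tau t = 0")
    case True then show ?thesis using Ff_phi0 by simp
  next
    case False
    then have st: "T - tau < t" "t < T" using phi_nz by auto
    have "Phi (t - tau) = 0" using st by (intro Phi_zero) simp
    then have "seg tau (ysol x) t (-tau) = Wm \<iota> w *v x" using tau_pos by (simp add: seg_def ysol_def)
    then show ?thesis by (rule Ff_x[OF x])
  qed
  have "dde_solution tau Ff UNIV Oy 0 (cconst tau (Wm \<iota> w *v x)) (ysol x) (ereal (T + \<delta>))"
    unfolding dde_solution_def ereal0_plus
  proof (intro conjI allI impI)
    show "0 < ereal (T + \<delta>)" using Tp dl by simp
    show "continuous_on {t. 0 - tau \<le> t \<and> ereal t < ereal (T + \<delta>)} (ysol x)"
      by (rule continuous_on_subset[OF ysol_cont_on]) auto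
    show "seg tau (ysol x) 0 = cconst tau (Wm \<iota> w *v x)"
    proof
      fix s
      show "seg tau (ysol x) 0 s = cconst tau (Wm \<iota> w *v x) s"
      proof (cases "s \<in> {-tau..0}")
        case True
        then have "Phi s = 0" using T_ge by (intro Phi_zero) auto
        then show ?thesis using True by (simp add: seg_def cconst_def ysol_def)
      qed (auto simp: seg_def cconst_def)
    qed
    fix t assume t: "0 \<le> t \<and> ereal t < ereal (T + \<delta>)"
    show "t \<in> UNIV" by simp
    show "seg tau (ysol x) t \<in> Oy" using Cs inX t by (auto simp: Oy_def)
    have "(ysol x has_vector_derivative bump (T - tau) tau t *\<^sub>R G x) (at t)"
      using t tau_pos by (intro ysol_deriv) auto
    then show "(ysol x has_vector_derivative Ff t (seg tau (ysol x) t)) (at t within {0..})"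
      unfolding Fseg by (rule has_vector_derivative_at_within)
  qed
  moreover have "ereal T < ereal (T + \<delta>)" using dl by simp
  ultimately show ?thesis by blast
qed

lemma sol_output: assumes x: "x \<in> X" and sol: "dde_solution tau Ff UNIV Oy 0 (cconst tau (Wm \<iota> w *v x)) y c"
  and Tc: "ereal T < c"
  shows "Pmat \<kappa> w' *v y T = Psi x"
proof -
  have "y T = ysol x T" using sol_unique[OF x sol, of T] Tc T_ge tau_pos by simp
  also have "\<dots> = Wm \<kappa> (1/w') *v Psi x" by (simp add: ysol_def Phi_T G_def)
  finally show ?thesis using WE by simp
qed

lemma lip:
  assumes KP: "KP \<ge> 0" and lipP: "\<forall>x\<in>X. \<forall>x'\<in>X. infnorm (Psi x - Psi x') \<le> KP * infnorm (x - x')"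
    and cond: "K * tau \<ge> 2 * (1 + KP / (w * w'))"
    and x: "x \<in> X" and x': "x' \<in> X"
  shows "infnorm (Ff t (cconst tau (Wm \<iota> w *v x)) - Ff t (cconst tau (Wm \<iota> w *v x')))
     \<le> K * cnorm tau (Cdiff (cconst tau (Wm \<iota> w *v x)) (cconst tau (Wm \<iota> w *v x')))"
proof -
  define d where "d = infnorm (x - x')"
  have d0: "0 \<le> d" unfolding d_def by (rule infnorm_pos_le)
  have Fu: "Ff t (cconst tau (Wm \<iota> w *v z)) = bump (T - tau) tau t *\<^sub>R G z" if "z \<in> X" for z
    using Ff_x[OF that] tau_pos by (simp add: cconst_def)
  have cn: "cnorm tau (Cdiff (cconst tau (Wm \<iota> w *v x)) (cconst tau (Wm \<iota> w *v x'))) = w * d"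
  proof -
    have "cnorm tau (Cdiff (cconst tau (Wm \<iota> w *v x)) (cconst tau (Wm \<iota> w *v x'))) = infnorm (Wm \<iota> w *v x - Wm \<iota> w *v x')"
      by (rule cnorm_const) (use tau_pos in simp)
    also have "\<dots> = infnorm (Wm \<iota> w *v (x - x'))" by (simp add: matrix_vector_mult_diff_distrib)
    also have "\<dots> = w * d" using infnorm_Wm[OF inj_i, of w] w_pos unfolding d_def by simp
    finally show ?thesis .
  qed
  have GG: "G x - G x' = Wm \<kappa> (1/w') *v (Psi x - Psi x') - Wm \<iota> w *v (x - x')"
    unfolding G_def by (simp add: matrix_vector_mult_diff_distrib)
  have b1: "infnorm (Wm \<kappa> (1/w') *v (Psi x - Psi x')) \<le> (1/w') * (KP * d)"
  proof -
    have "infnorm (Wm \<kappa> (1/w') *v (Psi x - Psi x')) = (1/w') * infnorm (Psi x - Psi x')"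
      using infnorm_Wm[OF inj_k] w'_pos by simp
    also have "\<dots> \<le> (1/w') * (KP * d)" using lipP x x' w'_pos unfolding d_def by (intro mult_left_mono) auto
    finally show ?thesis .
  qed
  have b2: "infnorm (Wm \<iota> w *v (x - x')) = w * d" using infnorm_Wm[OF inj_i] w_pos unfolding d_def by simp
  have Gb: "infnorm (G x - G x') \<le> (1/w') * (KP * d) + w * d"
    unfolding GG using infnorm_triangle[of "Wm \<kappa> (1/w') *v (Psi x - Psi x')" "- (Wm \<iota> w *v (x - x'))"] b1 b2
    by (simp add: infnorm_neg)
  have Fd: "Ff t (cconst tau (Wm \<iota> w *v x)) - Ff t (cconst tau (Wm \<iota> w *v x')) = bump (T - tau) tau t *\<^sub>R (G x - G x')"
    using Fu x x' by (simp add: algebra_simps)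
  have "infnorm (Ff t (cconst tau (Wm \<iota> w *v x)) - Ff t (cconst tau (Wm \<iota> w *v x')))
       \<le> (2 / tau) * ((1/w') * (KP * d) + w * d)"
  proof -
    have "\<bar>bump (T - tau) tau t\<bar> * infnorm (G x - G x') \<le> (2 / tau) * ((1/w') * (KP * d) + w * d)"
      using bump_bd[OF tau_pos, of "T - tau" t] infnorm_pos_le[of "G x - G x'"] Gb
        tau_pos by (intro mult_mono) auto
    then show ?thesis unfolding Fd infnorm_mul .
  qed
  also have "\<dots> = (2 * (1 + KP / (w * w')) / tau) * (w * d)"
    using w_pos w'_pos tau_pos by (simp add: field_simps)
  also have "\<dots> \<le> K * (w * d)"
  proof (rule mult_right_mono)
    show "2 * (1 + KP / (w * w')) / tau \<le> K" using cond tau_pos by (simp add: divide_le_eq mult.commute)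
    show "0 \<le> w * d" using w_pos d0 by simp
  qed
  finally show ?thesis using cn by simp
qed

end


theorem mainTheorem3:
  fixes k :: nat and T tau K K\<^sub>\<Psi> w w' :: real
    and X :: "(real^'n) set" and \<Psi> :: "real^'n \<Rightarrow> real^'q"
  assumes m_def: "CARD('m) = max CARD('n) CARD('q)"
    and T_pos: "T > 0"
    and X_open: "open X"
    and Psi_reg: "if k = 0 then continuous_on X \<Psi> else Ckb k X \<Psi>"
    and KPsi_nonneg: "K\<^sub>\<Psi> \<ge> 0"
    and Psi_lip: "\<forall>x\<in>X. \<forall>x'\<in>X. infnorm (\<Psi> x - \<Psi> x') \<le> K\<^sub>\<Psi> * infnorm (x - x')"
    and K_nonneg: "K \<ge> 0"
    and tau: "0 < tau" "tau \<le> T"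
    and w_pos: "w > 0" and w'_pos: "w' > 0"
    and cond: "K * tau \<ge> 2 * (1 + K\<^sub>\<Psi> / (w * w'))"
  shows "\<exists>(W :: real^'n^'m) (b :: real^'m) (W' :: real^'m^'q) (b' :: real^'q)
            (Oy :: (real \<Rightarrow> real^'m) set) (F :: real \<Rightarrow> (real \<Rightarrow> real^'m) \<Rightarrow> real^'m).
     let lam = (\<lambda>x. W *v x + b);
         O0 = {cconst tau (lam x) | x. x \<in> X}
     in C_open tau Oy \<and> O0 \<subseteq> Oy \<and>
        (\<forall>x\<in>X. \<exists>y c. dde_solution tau F UNIV Oy 0 (cconst tau (lam x)) y c \<and> ereal T < c) \<and>
        C0kb Cadd Cscale (cnorm tau) infnorm (Cset tau) (UNIV \<times> Oy) k F \<and>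
        (k = 0 \<longrightarrow>
           (\<forall>x\<in>X. \<forall>y1 c1 y2 c2.
              dde_solution tau F UNIV Oy 0 (cconst tau (lam x)) y1 c1 \<and>
              dde_solution tau F UNIV Oy 0 (cconst tau (lam x)) y2 c2 \<longrightarrow>
              (\<forall>t. - tau \<le> t \<and> ereal t < min c1 c2 \<longrightarrow> y1 t = y2 t))) \<and>
        (\<forall>x\<in>X. \<forall>y c. dde_solution tau F UNIV Oy 0 (cconst tau (lam x)) y c \<and> ereal T < c
              \<longrightarrow> W' *v y T + b' = \<Psi> x) \<and>
        (\<forall>t u v. u \<in> O0 \<and> v \<in> O0 \<longrightarrow> infnorm (F t u - F t v) \<le> K * cnorm tau (Cdiff u v)) \<and>
        mat_infnorm W = w \<and> mat_infnorm W' = w'"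
proof -
  have cn: "CARD('n) \<le> CARD('m)" "CARD('q) \<le> CARD('m)" using m_def by auto
  obtain \<iota> :: "'n \<Rightarrow> 'm" where inj_i: "inj \<iota>"
    using card_le_inj[of "UNIV :: 'n set" "UNIV :: 'm set"] cn(1) by auto
  obtain \<kappa> :: "'q \<Rightarrow> 'm" where inj_k: "inj \<kappa>"
    using card_le_inj[of "UNIV :: 'q set" "UNIV :: 'm set"] cn(2) by auto
  obtain DP where DP: "deriv_family (+) (*\<^sub>R) infnorm infnorm UNIV (UNIV \<times> X) (\<lambda>_ x. \<Psi> x) k DP"
    "\<forall>j\<in>{1..k}. bdd_above {ml_norm infnorm infnorm UNIV j (DP j t x) | t x. (t,x) \<in> UNIV \<times> X}"
    using Psi_family[OF Psi_reg] by blast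
  interpret S: sol tau w w' X k \<Psi> DP T \<iota> \<kappa>
  proof (unfold_locales)
    show "0 < tau" by (rule tau(1))
    show "0 < 1 / w" using w_pos by simp
    show "0 < 1 / w'" using w'_pos by simp
    show "open X" by (rule X_open)
    show "deriv_family (+) (*\<^sub>R) infnorm infnorm UNIV (UNIV \<times> X) (\<lambda>_ x. \<Psi> x) k DP" by (rule DP(1))
    show "\<forall>j\<in>{1..k}. bdd_above {ml_norm infnorm infnorm UNIV j (DP j t x) | t x. (t,x) \<in> UNIV \<times> X}" by (rule DP(2))
    show "continuous_on UNIV (bump (T - tau) tau)" by (rule bump_cont)
    show "\<bar>bump (T - tau) tau t\<bar> \<le> 2 / tau" for t by (rule bump_bd[OF tau(1)])
    show "infnorm (Pmat \<iota> (1 / w) *v z) \<le> 1 / w * infnorm z" for z by (rule infnorm_Pmat) (use w_pos in simp)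
    show "infnorm (Wm \<kappa> (1 / w') *v z) \<le> 1 / w' * infnorm z" for z using infnorm_Wm[OF inj_k, of "1/w'" z] w'_pos by simp
    show "tau \<le> T" by (rule tau(2))
    show "0 < w" by (rule w_pos)
    show "0 < w'" by (rule w'_pos)
    show "inj \<iota>" by (rule inj_i)
    show "inj \<kappa>" by (rule inj_k)
  qed
  have C1: "C_open tau S.Oy" by (rule S.C_open_Oy)
  have C2: "{cconst tau (Wm \<iota> w *v x) | x. x \<in> X} \<subseteq> S.Oy"
  proof
    fix u assume "u \<in> {cconst tau (Wm \<iota> w *v x) | x. x \<in> X}"
    then obtain x where x: "u = cconst tau (Wm \<iota> w *v x)" "x \<in> X" by blast
    have "S.ev u = x" unfolding S.ev_def x(1) using tau(1) S.PW by (simp add: cconst_def)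
    then show "u \<in> S.Oy" using x cconst_Cset by (auto simp: S.Oy_def)
  qed
  have C3: "\<forall>x\<in>X. \<exists>y c. dde_solution tau S.Ff UNIV S.Oy 0 (cconst tau (Wm \<iota> w *v x)) y c \<and> ereal T < c"
    using S.sol_exists by blast
  have C4: "C0kb Cadd Cscale (cnorm tau) infnorm (Cset tau) (UNIV \<times> S.Oy) k S.Ff" by (rule S.F_C0kb)
  have C5: "k = 0 \<longrightarrow> (\<forall>x\<in>X. \<forall>y1 c1 y2 c2.
              dde_solution tau S.Ff UNIV S.Oy 0 (cconst tau (Wm \<iota> w *v x)) y1 c1 \<and>
              dde_solution tau S.Ff UNIV S.Oy 0 (cconst tau (Wm \<iota> w *v x)) y2 c2 \<longrightarrow>
              (\<forall>t. - tau \<le> t \<and> ereal t < min c1 c2 \<longrightarrow> y1 t = y2 t))"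
  proof (intro impI ballI allI)
    fix x y1 c1 y2 c2 t
    assume x: "x \<in> X" and s: "dde_solution tau S.Ff UNIV S.Oy 0 (cconst tau (Wm \<iota> w *v x)) y1 c1 \<and>
              dde_solution tau S.Ff UNIV S.Oy 0 (cconst tau (Wm \<iota> w *v x)) y2 c2"
      and t: "- tau \<le> t \<and> ereal t < min c1 c2"
    have "y1 t = S.ysol x t" using S.sol_unique[OF x] s t by auto
    moreover have "y2 t = S.ysol x t" using S.sol_unique[OF x] s t by auto
    ultimately show "y1 t = y2 t" by simp
  qed
  have C6: "\<forall>x\<in>X. \<forall>y c. dde_solution tau S.Ff UNIV S.Oy 0 (cconst tau (Wm \<iota> w *v x)) y c \<and> ereal T < c
              \<longrightarrow> Pmat \<kappa> w' *v y T + 0 = \<Psi> x"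
    using S.sol_output by auto
  have C7: "\<forall>t u v. u \<in> {cconst tau (Wm \<iota> w *v x) | x. x \<in> X} \<and> v \<in> {cconst tau (Wm \<iota> w *v x) | x. x \<in> X}
      \<longrightarrow> infnorm (S.Ff t u - S.Ff t v) \<le> K * cnorm tau (Cdiff u v)"
  proof (intro allI impI)
    fix t u v assume "u \<in> {cconst tau (Wm \<iota> w *v x) | x. x \<in> X} \<and> v \<in> {cconst tau (Wm \<iota> w *v x) | x. x \<in> X}"
    then obtain x x' where "u = cconst tau (Wm \<iota> w *v x)" "v = cconst tau (Wm \<iota> w *v x')" "x \<in> X" "x' \<in> X" by blast
    then show "infnorm (S.Ff t u - S.Ff t v) \<le> K * cnorm tau (Cdiff u v)"
      using S.lip[OF KPsi_nonneg Psi_lip cond] by simp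
  qed
  have C8: "mat_infnorm (Wm \<iota> w) = w" using mat_infnorm_Wm[OF inj_i] w_pos by simp
  have C9: "mat_infnorm (Pmat \<kappa> w') = w'" by (rule mat_infnorm_Pmat) (use w'_pos in simp)
  show ?thesis
    apply (rule exI[of _ "Wm \<iota> w"], rule exI[of _ 0], rule exI[of _ "Pmat \<kappa> w'"], rule exI[of _ 0],
        rule exI[of _ S.Oy], rule exI[of _ S.Ff])
    apply (simp only: Let_def add_0_right)
    apply (intro conjI)
    using C1 C2 C3 C4 C5 C6 C7 C8 C9 by simp_all
qed

end
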